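(* Let $A\in\mathbb{R}^{n\times n}$ be such that $\Lambda_1$ is complex, i.e. the set of eigenvalues of $A$ with maximal real part consists exactly of a pair of simple complex conjugate eigenvalues $\lambda_1,\overline{\lambda_1}$ with $\omega_1=\operatorname{Im}\lambda_1>0$. Let $y_0\in\mathbb{R}^n$ and $\hat z_0\in\mathbb{R}^n$, $\|\hat z_0\|=1$, with $w^{(1)}y_0\neq0$ and $w^{(1)}\hat z_0\neq0$. Then, as $t\to+\infty$, $$K(t,y_0,\hat z_0)\sim \mathrm{OSF}(y_0,\hat z_0)\cdot \mathrm{OT}(t,y_0,\hat z_0),\qquad K(t,y_0)\sim\mathrm{OSF}(y_0)\cdot\mathrm{OT}(t,y_0),$$ where $$\mathrm{OSF}(y_0,\hat z_0)=\frac{|\hat w^{(1)}\hat z_0|}{|\hat w^{(1)}\hat y_0|},\quad \mathrm{OSF}(y_0)=\frac{1}{|\hat w^{(1)}\hat y_0|},\quad \mathrm{OT}(t,y_0,\hat z_0)=\frac{\|\hat\Theta_1(t,\hat z_0)\|}{\|\hat\Theta_1(t,\hat y_0)\|},\quad \mathrm{OT}(t,y_0)=\frac{\|\hat\Theta_1(t)\|}{\|\hat\Theta_1(t,\hat y_0)\|}.$$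
   Context: $\|\cdot\|$ is a vector norm on $\mathbb{C}^n$, used on $\mathbb{R}^n$ by restriction; matrix norms of real matrices are induced over real vectors. $\hat y_0=y_0/\|y_0\|$, $K(t,y_0,\hat z_0)=\|e^{tA}\hat z_0\|/\|e^{tA}\hat y_0\|$, $K(t,y_0)=\|e^{tA}\|/\|e^{tA}\hat y_0\|$ (real induced norm). $w^{(1)}$ (complex row) and $v^{(1)}$ (complex column) are left and right eigenvectors of $A$ for $\lambda_1$; $\hat w^{(1)}=w^{(1)}/\|w^{(1)}\|$ with $\|w^{(1)}\|=\max_{u\in\mathbb{C}^n,\|u\|=1}|w^{(1)}u|$, and $\hat v^{(1)}=v^{(1)}/\|v^{(1)}\|$. Write $\hat v^{(1)}_k=|\hat v^{(1)}_k|e^{\sqrt{-1}\alpha_{1k}}$, $\hat w^{(1)}_l=|\hat w^{(1)}_l|e^{\sqrt{-1}\beta_{1l}}$, and for $u\in\mathbb{R}^n$ with $w^{(1)}u\ne0$, $\hat w^{(1)}u=|\hat w^{(1)}u|e^{\sqrt{-1}\gamma_1(u)}$. Define $\hat\Theta_1(t,u)=\big(|\hat v^{(1)}_k|\cos(\omega_1t+\alpha_{1k}+\gamma_1(u))\big)_{k=1}^n\in\mathbb{R}^n$ and $\hat\Theta_1(t)=\big(|\hat v^{(1)}_k||\hat w^{(1)}_l|\cos(\omega_1t+\alpha_{1k}+\beta_{1l})\big)_{k,l=1}^n\in\mathbb{R}^{n\times n}$. $a(t)\sim b(t)$ means $a(t)/b(t)\to1$ as $t\to+\infty$. *)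

theory Defs
  imports "HOL-Analysis.Analysis" "HOL-Computational_Algebra.Polynomial"
begin

primrec matpow :: "'a::comm_ring_1^'n^'n \<Rightarrow> nat \<Rightarrow> 'a^'n^'n" where
  "matpow M 0 = mat 1"
| "matpow M (Suc k) = M ** matpow M k"

definition mexp :: "real \<Rightarrow> real^'n^'n \<Rightarrow> real^'n^'n" where
  "mexp t A = (\<chi> i j. (\<Sum>k. (t ^ k / fact k) * (matpow A k) $ i $ j))"

definition cvec :: "real^'n \<Rightarrow> complex^'n" where
  "cvec x = (\<chi> i. complex_of_real (x $ i))"

definition cmat :: "real^'n^'n \<Rightarrow> complex^'n^'n" where
  "cmat A = (\<chi> i j. complex_of_real (A $ i $ j))"

definition charpoly :: "real^'n^'n \<Rightarrow> complex poly" where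
  "charpoly A = det (\<chi> i j. (if i = j then [:0, 1:] else 0) - [: complex_of_real (A $ i $ j) :])"

definition eigenvalues :: "real^'n^'n \<Rightarrow> complex set" where
  "eigenvalues A = {z. poly (charpoly A) z = 0}"

definition Lambda1 :: "real^'n^'n \<Rightarrow> complex set" where
  "Lambda1 A = {z \<in> eigenvalues A. \<forall>\<mu> \<in> eigenvalues A. Re \<mu> \<le> Re z}"

definition simple_eigenvalue :: "real^'n^'n \<Rightarrow> complex \<Rightarrow> bool" where
  "simple_eigenvalue A lam \<longleftrightarrow> lam \<in> eigenvalues A \<and> order lam (charpoly A) = 1"

definition rowmul :: "complex^'n \<Rightarrow> complex^'n \<Rightarrow> complex" where
  "rowmul w u = (\<Sum>i\<in>UNIV. w $ i * u $ i)"

definition left_eigvec :: "real^'n^'n \<Rightarrow> complex \<Rightarrow> complex^'n \<Rightarrow> bool" where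
  "left_eigvec A lam w \<longleftrightarrow> w \<noteq> 0 \<and> w v* cmat A = lam *s w"

definition right_eigvec :: "real^'n^'n \<Rightarrow> complex \<Rightarrow> complex^'n \<Rightarrow> bool" where
  "right_eigvec A lam v \<longleftrightarrow> v \<noteq> 0 \<and> cmat A *v v = lam *s v"

definition is_cnorm :: "(complex^'n \<Rightarrow> real) \<Rightarrow> bool" where
  "is_cnorm N \<longleftrightarrow> (\<forall>x. N x = 0 \<longleftrightarrow> x = 0) \<and> (\<forall>c x. N (c *s x) = cmod c * N x)
     \<and> (\<forall>x y. N (x + y) \<le> N x + N y)"

definition rnorm :: "(complex^'n \<Rightarrow> real) \<Rightarrow> real^'n \<Rightarrow> real" where
  "rnorm N x = N (cvec x)"

definition mnorm :: "(complex^'n \<Rightarrow> real) \<Rightarrow> real^'n^'n \<Rightarrow> real" where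
  "mnorm N M = Sup {rnorm N (M *v x) | x. rnorm N x = 1}"

definition rownorm :: "(complex^'n \<Rightarrow> real) \<Rightarrow> complex^'n \<Rightarrow> real" where
  "rownorm N w = Sup {cmod (rowmul w u) | u. N u = 1}"

definition normalize_row :: "(complex^'n \<Rightarrow> real) \<Rightarrow> complex^'n \<Rightarrow> complex^'n" where
  "normalize_row N w = complex_of_real (1 / rownorm N w) *s w"

definition normalize_col :: "(complex^'n \<Rightarrow> real) \<Rightarrow> complex^'n \<Rightarrow> complex^'n" where
  "normalize_col N v = complex_of_real (1 / N v) *s v"

definition normalize_real :: "(complex^'n \<Rightarrow> real) \<Rightarrow> real^'n \<Rightarrow> real^'n" where
  "normalize_real N y = (1 / rnorm N y) *\<^sub>R y"

definition K2 :: "(complex^'n \<Rightarrow> real) \<Rightarrow> real^'n^'n \<Rightarrow> real \<Rightarrow> real^'n \<Rightarrow> real^'n \<Rightarrow> real" where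
  "K2 N A t y0 z0 = rnorm N (mexp t A *v z0) / rnorm N (mexp t A *v normalize_real N y0)"

definition K1 :: "(complex^'n \<Rightarrow> real) \<Rightarrow> real^'n^'n \<Rightarrow> real \<Rightarrow> real^'n \<Rightarrow> real" where
  "K1 N A t y0 = mnorm N (mexp t A) / rnorm N (mexp t A *v normalize_real N y0)"

text \<open>Theta-hat_1(t,u) and Theta-hat_1(t); vh, wh are the normalized eigenvectors, om = omega_1.
  alpha_k = arg(vh_k), beta_l = arg(wh_l), gamma_1(u) = arg(wh u).\<close>
definition Theta_vec :: "complex^'n \<Rightarrow> complex^'n \<Rightarrow> real \<Rightarrow> real \<Rightarrow> real^'n \<Rightarrow> real^'n" where
  "Theta_vec vh wh om t u =
     (\<chi> k. cmod (vh $ k) * cos (om * t + Arg (vh $ k) + Arg (rowmul wh (cvec u))))"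

definition Theta_mat :: "complex^'n \<Rightarrow> complex^'n \<Rightarrow> real \<Rightarrow> real \<Rightarrow> real^'n^'n" where
  "Theta_mat vh wh om t =
     (\<chi> k l. cmod (vh $ k) * cmod (wh $ l) * cos (om * t + Arg (vh $ k) + Arg (wh $ l)))"

definition asym :: "(real \<Rightarrow> real) \<Rightarrow> (real \<Rightarrow> real) \<Rightarrow> bool" where
  "asym a b \<longleftrightarrow> ((\<lambda>t. a t / b t) \<longlongrightarrow> 1) at_top"

end

theory Submission
  imports Defs "HOL-Computational_Algebra.Fundamental_Theorem_Algebra"
begin

section \<open>Norm facts\<close>

lemma cn_zero: "is_cnorm N \<Longrightarrow> N 0 = 0"
  unfolding is_cnorm_def by blast

lemma cn_smult: "is_cnorm N \<Longrightarrow> N (c *s x) = cmod c * N x"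
  unfolding is_cnorm_def by blast

lemma cn_tri: "is_cnorm N \<Longrightarrow> N (x + y) \<le> N x + N y"
  unfolding is_cnorm_def by blast

lemma cn_eq0: "is_cnorm N \<Longrightarrow> N x = 0 \<longleftrightarrow> x = 0"
  unfolding is_cnorm_def by blast

lemma cn_neg: "is_cnorm N \<Longrightarrow> N (- x) = N x"
  using cn_smult[of N "-1" x] by simp

lemma cn_nonneg: "is_cnorm N \<Longrightarrow> N x \<ge> 0"
  using cn_tri[of N x "-x"] cn_zero[of N] cn_neg[of N x] by simp

lemma cn_diff: "is_cnorm N \<Longrightarrow> N (x - y) \<le> N x + N y"
  using cn_tri[of N x "-y"] cn_neg[of N y] by simp

lemma cn_rev: "is_cnorm N \<Longrightarrow> \<bar>N x - N y\<bar> \<le> N (x - y)"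
  using cn_tri[of N "x - y" y] cn_tri[of N "y - x" x] cn_neg[of N "x - y"] 
  by (simp add: abs_le_iff)

lemma cn_sum: "is_cnorm N \<Longrightarrow> N (\<Sum>i\<in>S. f i) \<le> (\<Sum>i\<in>S. N (f i))"
proof (induction S rule: infinite_finite_induct)
  case (infinite S) then show ?case by (simp add: cn_zero)
next
  case empty then show ?case by (simp add: cn_zero)
next
  case (insert x F)
  then show ?case using cn_tri[of N "f x" "sum f F"] by simp
qed

definition cnB :: "(complex^'n \<Rightarrow> real) \<Rightarrow> real" where
  "cnB N = (\<Sum>i\<in>UNIV. N (axis i 1))"

lemma cn_upper: fixes N :: "complex^'n \<Rightarrow> real" assumes "is_cnorm N" shows "N x \<le> cnB N * (\<Sum>i\<in>UNIV. cmod (x $ i))"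
proof -
  have "N x = N (\<Sum>i\<in>UNIV. (x$i) *s axis i 1)" by (simp add: basis_expansion)
  also have "\<dots> \<le> (\<Sum>i\<in>UNIV. cmod (x$i) * N (axis i 1))"
    using cn_sum[OF assms] cn_smult[OF assms] by (metis (no_types, lifting) sum.cong)
  also have "\<dots> \<le> (\<Sum>i\<in>UNIV. (\<Sum>j\<in>UNIV. cmod (x$j)) * N (axis i 1))"
    apply (rule sum_mono) apply (rule mult_right_mono)
    using cn_nonneg[OF assms] by (auto intro!: member_le_sum)
  also have "\<dots> = cnB N * (\<Sum>i\<in>UNIV. cmod (x $ i))"
    by (simp add: cnB_def sum_distrib_right mult.commute)
  finally show ?thesis .
qed

lemma sum_cmod_le_norm: "(\<Sum>i\<in>UNIV. cmod (x $ i)) \<le> real CARD('n) * norm (x::complex^'n)"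
proof -
  have "(\<Sum>i\<in>UNIV. cmod (x $ i)) \<le> (\<Sum>i\<in>(UNIV::'n set). norm x)"
    by (rule sum_mono) (rule Finite_Cartesian_Product.norm_nth_le)
  then show ?thesis by simp
qed

lemma cnB_nonneg: fixes N :: "complex^'n \<Rightarrow> real" shows "is_cnorm N \<Longrightarrow> cnB N \<ge> 0"
  using cn_nonneg[of N] by (simp add: cnB_def sum_nonneg)

lemma cn_cont: fixes N :: "complex^'n \<Rightarrow> real" assumes "is_cnorm N" shows "continuous_on UNIV N"
proof -
  let ?L = "cnB N * real CARD('n)"
  have "\<bar>N x - N y\<bar> \<le> ?L * dist x y" for x y :: "complex^'n"
  proof -
    have "\<bar>N x - N y\<bar> \<le> N (x - y)" by (rule cn_rev[OF assms])
    also have "\<dots> \<le> cnB N * (\<Sum>i\<in>UNIV. cmod ((x - y) $ i))" by (rule cn_upper[OF assms])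
    also have "\<dots> \<le> cnB N * (real CARD('n) * norm (x - y))"
      by (rule mult_left_mono[OF sum_cmod_le_norm cnB_nonneg[OF assms]])
    finally show ?thesis by (simp add: dist_norm mult.assoc)
  qed
  then have "\<forall>x. \<forall>e>0. \<exists>d>0. \<forall>y. dist y x < d \<longrightarrow> dist (N y) (N x) < e"
  proof (intro allI impI)
    fix x :: "complex^'n" and e :: real assume e: "e > 0"
    have L: "?L \<ge> 0" using cnB_nonneg[OF assms] by simp
    show "\<exists>d>0. \<forall>y. dist y x < d \<longrightarrow> dist (N y) (N x) < e"
    proof (intro exI[of _ "e / (?L + 1)"] conjI allI impI)
      show "e / (?L + 1) > 0" using e L by simp
      fix y assume "dist y x < e / (?L + 1)"
      then have "(?L + 1) * dist y x < e" using L by (simp add: field_simps)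
      moreover have "dist (N y) (N x) \<le> ?L * dist y x"
        using \<open>\<And>x y. \<bar>N x - N y\<bar> \<le> ?L * dist x y\<close>[of y x] by (simp add: dist_real_def)
      moreover have "?L * dist y x \<le> (?L + 1) * dist y x" by (simp add: distrib_right)
      ultimately show "dist (N y) (N x) < e" by linarith
    qed
  qed
  then show ?thesis unfolding continuous_on_iff by blast
qed

lemma cn_lower: fixes N :: "complex^'n \<Rightarrow> real" assumes "is_cnorm N" shows "\<exists>m>0. \<forall>x. m * norm x \<le> N x"
proof -
  let ?S = "sphere (0::complex^'n) 1"
  have "compact ?S" by simp
  moreover have "?S \<noteq> {}" using vector_choose_size[of 1] by (auto simp: sphere_def)
  moreover have "continuous_on ?S N" using cn_cont[OF assms] continuous_on_subset by blast
  ultimately obtain x0 where x0: "x0 \<in> ?S" "\<And>y. y \<in> ?S \<Longrightarrow> N x0 \<le> N y"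
    using continuous_attains_inf by metis
  have "x0 \<noteq> 0" using x0 by auto
  then have m: "N x0 > 0" using cn_eq0[OF assms, of x0] cn_nonneg[OF assms, of x0] by linarith
  have "N x0 * norm x \<le> N x" for x
  proof (cases "x = 0")
    case True then show ?thesis by (simp add: cn_zero[OF assms])
  next
    case False
    let ?y = "(1 / norm x) *\<^sub>R x"
    have sc: "\<And>r z. (complex_of_real r) *s z = r *\<^sub>R (z::complex^'n)"
      by (vector scaleR_conv_of_real)
    have ny: "norm ?y = 1" using False by simp
    then have "N x0 \<le> N ?y" using x0 by simp
    also have "N ?y = (1 / norm x) * N x"
      using cn_smult[OF assms, of "complex_of_real (1 / norm x)" x] sc[of "1 / norm x" x] by (simp add: norm_divide)
    finally show ?thesis using False by (simp add: field_simps)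
  qed
  then show ?thesis using m by blast
qed

section \<open>Matrix exponential\<close>

lemma matpow_Suc_right: "matpow A (Suc k) = matpow A k ** A"
proof (induction k)
  case 0 then show ?case by (simp add: matrix_mul_lid matrix_mul_rid)
next
  case (Suc k)
  have "matpow A (Suc (Suc k)) = A ** (matpow A k ** A)" using Suc by simp
  also have "\<dots> = matpow A (Suc k) ** A" by (simp add: matrix_mul_assoc)
  finally show ?case .
qed

definition mbound :: "real^'n^'n \<Rightarrow> real" where
  "mbound A = (\<Sum>i\<in>UNIV. \<Sum>j\<in>UNIV. \<bar>A $ i $ j\<bar>) + 1"

lemma mbound_ge: "\<bar>A $ i $ j\<bar> \<le> mbound A" "mbound A \<ge> 1"
proof -
  have "\<bar>A $ i $ j\<bar> \<le> (\<Sum>j\<in>UNIV. \<bar>A $ i $ j\<bar>)" by (rule member_le_sum) auto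
  also have "\<dots> \<le> (\<Sum>i\<in>UNIV. \<Sum>j\<in>UNIV. \<bar>A $ i $ j\<bar>)"
    by (rule member_le_sum[of i UNIV "\<lambda>i. \<Sum>j\<in>UNIV. \<bar>A $ i $ j\<bar>"]) (auto intro: sum_nonneg)
  finally show "\<bar>A $ i $ j\<bar> \<le> mbound A" unfolding mbound_def by simp
  show "mbound A \<ge> 1" unfolding mbound_def by (simp add: sum_nonneg)
qed

lemma matpow_bound: "\<bar>matpow A k $ i $ j\<bar> \<le> (real CARD('n) * mbound (A::real^'n^'n)) ^ k"
proof (induction k arbitrary: i j)
  case 0 then show ?case by (simp add: mat_def)
next
  case (Suc k)
  let ?b = "real CARD('n) * mbound A"
  have "\<bar>matpow A (Suc k) $ i $ j\<bar> = \<bar>\<Sum>l\<in>UNIV. A $ i $ l * matpow A k $ l $ j\<bar>"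
    by (simp add: matrix_matrix_mult_def)
  also have "\<dots> \<le> (\<Sum>l\<in>UNIV. \<bar>A $ i $ l\<bar> * \<bar>matpow A k $ l $ j\<bar>)"
    by (rule order_trans[OF sum_abs]) (simp add: abs_mult)
  also have "\<dots> \<le> (\<Sum>l\<in>(UNIV::'n set). mbound A * ?b ^ k)"
    using mbound_ge(2)[of A] by (intro sum_mono mult_mono mbound_ge Suc) (auto)
  also have "\<dots> = ?b ^ Suc k" by simp
  finally show ?case .
qed

lemma mexp_summable: fixes A :: "real^'n^'n" shows "summable (\<lambda>k. (matpow A k $ i $ j / fact k) * t ^ k)"
proof -
  define b where "b = real CARD('n) * mbound A"
  have "norm ((matpow A n $ i $ j / fact n) * t ^ n) \<le> inverse (fact n) * (b * \<bar>t\<bar>) ^ n" for n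
  proof -
    have "norm ((matpow A n $ i $ j / fact n) * t ^ n) = \<bar>matpow A n $ i $ j\<bar> * \<bar>t\<bar> ^ n * inverse (fact n)"
      by (simp add: abs_mult power_abs divide_inverse)
    also have "\<dots> \<le> b ^ n * \<bar>t\<bar> ^ n * inverse (fact n)"
      using matpow_bound[of A n i j] unfolding b_def
      by (intro mult_right_mono) (auto)
    finally show ?thesis by (simp add: power_mult_distrib mult_ac)
  qed
  then show ?thesis
    by (intro summable_comparison_test'[OF summable_exp[of "b * \<bar>t\<bar>"]]) auto
qed

lemma mexp_entry: "mexp t A $ i $ j = (\<Sum>k. (matpow A k $ i $ j / fact k) * t ^ k)"
  unfolding mexp_def by (simp add: field_simps)

lemma mexp_zero: "mexp 0 A = mat 1"
  by (simp only: vec_eq_iff mexp_entry powser_zero) (simp add: mat_def)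

lemma mexp_deriv: "((\<lambda>t. mexp t A $ i $ j) has_real_derivative (mexp t A ** A) $ i $ j) (at t)"
proof -
  let ?c = "\<lambda>i j k. matpow A k $ i $ j / fact k"
  have d: "((\<lambda>t. \<Sum>k. ?c i j k * t ^ k) has_field_derivative (\<Sum>k. diffs (?c i j) k * t ^ k)) (at t)"
    by (rule termdiffs_strong_converges_everywhere) (rule mexp_summable)
  have dk: "diffs (?c i j) k = (\<Sum>l\<in>UNIV. matpow A k $ i $ l * A $ l $ j) / fact k" for k
  proof -
    have f: "real (Suc k) * (x / fact (Suc k)) = x / fact k" for x
      by (simp add: fact_Suc del: of_nat_Suc)
    show ?thesis unfolding diffs_def f matpow_Suc_right by (simp add: matrix_matrix_mult_def)
  qed
  have e: "diffs (?c i j) k * t ^ k = (\<Sum>l\<in>UNIV. ?c i l k * t ^ k * A $ l $ j)" for k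
    by (simp only: dk sum_divide_distrib sum_distrib_right) (intro sum.cong refl, simp add: field_simps)
  have "(\<Sum>k. diffs (?c i j) k * t ^ k) = (\<Sum>k. \<Sum>l\<in>UNIV. ?c i l k * t ^ k * A $ l $ j)"
    by (simp only: e)
  also have "\<dots> = (\<Sum>l\<in>UNIV. \<Sum>k. ?c i l k * t ^ k * A $ l $ j)"
    by (rule suminf_sum) (intro summable_mult2 mexp_summable)
  also have "\<dots> = (\<Sum>l\<in>UNIV. (\<Sum>k. ?c i l k * t ^ k) * A $ l $ j)"
    by (intro sum.cong refl suminf_mult2[symmetric] mexp_summable)
  also have "\<dots> = (mexp t A ** A) $ i $ j"
    by (simp add: matrix_matrix_mult_def mexp_entry)
  finally show ?thesis using d unfolding mexp_entry by simp
qed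

lemma cmat_mult: "cmat (M ** M') = cmat M ** cmat M'"
  by (simp add: cmat_def matrix_matrix_mult_def vec_eq_iff)

lemma cvec_mult: "cvec (M *v x) = cmat M *v cvec x"
  by (simp add: cmat_def cvec_def matrix_vector_mult_def vec_eq_iff)

lemma cmat_one: "cmat (mat 1) = mat 1"
  by (simp add: cmat_def mat_def vec_eq_iff)

abbreviation XX :: "real^'n^'n \<Rightarrow> real \<Rightarrow> complex^'n^'n" where
  "XX A t \<equiv> cmat (mexp t A)"

lemma XX_zero: "XX A 0 = mat 1"
  by (simp add: mexp_zero cmat_one)

lemma XX_deriv:
  "((\<lambda>t. (XX A t *v h) $ i) has_vector_derivative (XX A t *v (cmat A *v h)) $ i) (at t)"
proof -
  have "((\<lambda>t. \<Sum>l\<in>UNIV. complex_of_real (mexp t A $ i $ l) * h $ l) has_vector_derivative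
      (\<Sum>l\<in>UNIV. complex_of_real ((mexp t A ** A) $ i $ l) * h $ l)) (at t)"
    by (intro has_vector_derivative_sum has_vector_derivative_mult_left has_vector_derivative_of_real mexp_deriv)
  also have "(\<Sum>l\<in>UNIV. complex_of_real ((mexp t A ** A) $ i $ l) * h $ l) =
      (\<Sum>l\<in>UNIV. \<Sum>m\<in>UNIV. complex_of_real (mexp t A $ i $ m) * (complex_of_real (A $ m $ l) * h $ l))"
    by (simp only: matrix_matrix_mult_def vec_lambda_beta of_real_sum of_real_mult sum_distrib_right mult.assoc)
  also have "\<dots> = (\<Sum>m\<in>UNIV. complex_of_real (mexp t A $ i $ m) * (\<Sum>l\<in>UNIV. complex_of_real (A $ m $ l) * h $ l))"
    by (simp only: sum_distrib_left) (rule sum.swap)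
  also have "\<dots> = (XX A t *v (cmat A *v h)) $ i"
    by (simp add: matrix_vector_mult_def cmat_def)
  finally show ?thesis by (simp add: matrix_vector_mult_def cmat_def)
qed

lemma exp_neg_deriv:
  "((\<lambda>s. exp (- (complex_of_real s * r))) has_vector_derivative (- r * exp (- (complex_of_real s * r)))) (at s)"
proof -
  have "((\<lambda>z. exp (- (z * r))) has_field_derivative (- r * exp (- (complex_of_real s * r)))) (at (complex_of_real s))"
    by (auto intro!: derivative_eq_intros)
  from has_vector_derivative_real_field[OF this] show ?thesis by simp
qed

lemma F_deriv:
  fixes f g :: "real \<Rightarrow> complex"
  assumes d: "\<And>t. (f has_vector_derivative (r * f t + g t)) (at t)"
  shows "((\<lambda>s. exp (- (complex_of_real s * r)) * f s) has_vector_derivative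
           (exp (- (complex_of_real s * r)) * g s)) (at s)"
proof -
  have "((\<lambda>s. exp (- (complex_of_real s * r)) * f s) has_vector_derivative
     (exp (- (complex_of_real s * r)) * (r * f s + g s) + (- r * exp (- (complex_of_real s * r))) * f s)) (at s)"
    by (rule has_vector_derivative_mult[OF exp_neg_deriv d])
  then show ?thesis by (simp add: algebra_simps)
qed

lemma exp_cancel: "exp (z::complex) * (exp (- z) * y) = y"
  by (metis exp_add exp_zero add.right_inverse mult.assoc mult_1)

lemma ode_exact:
  fixes f :: "real \<Rightarrow> complex"
  assumes d: "\<And>t. (f has_vector_derivative (r * f t)) (at t)"
  shows "f t = exp (complex_of_real t * r) * f 0"
proof -
  have dz: "\<And>s. s \<in> UNIV \<Longrightarrow> ((\<lambda>s. exp (- (complex_of_real s * r)) * f s) has_vector_derivative 0) (at s within UNIV)"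
    using F_deriv[of f r "\<lambda>_. 0"] d by simp
  obtain c where c0: "\<And>s. s \<in> UNIV \<Longrightarrow> exp (- (complex_of_real s * r)) * f s = c"
    by (metis has_vector_derivative_zero_constant[OF convex_UNIV dz])
  have c: "\<And>s. exp (- (complex_of_real s * r)) * f s = c" using c0 by simp
  have "f t = exp (complex_of_real t * r) * (exp (- (complex_of_real t * r)) * f t)"
    by (rule exp_cancel[symmetric])
  also have "\<dots> = exp (complex_of_real t * r) * f 0" using c[of t] c[of 0] by simp
  finally show ?thesis .
qed

lemma ode_bound:
  fixes f g :: "real \<Rightarrow> complex"
  assumes d: "\<And>t. (f has_vector_derivative (r * f t + g t)) (at t)"
    and gb: "\<And>t. t \<ge> 0 \<Longrightarrow> cmod (g t) \<le> C * (1 + t) ^ k * exp (a * t)"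
    and ra: "Re r \<le> a" and C: "C \<ge> 0" and t: "t \<ge> 0"
  shows "cmod (f t) \<le> (cmod (f 0) + C) * (1 + t) ^ Suc k * exp (a * t)"
proof (cases "t = 0")
  case True then show ?thesis by (simp add: C)
next
  case False
  then have tp: "t > 0" using t by simp
  define F where "F s = exp (- (complex_of_real s * r)) * f s" for s
  have dF: "\<And>s. (F has_vector_derivative (exp (- (complex_of_real s * r)) * g s)) (at s)"
    unfolding F_def by (rule F_deriv[OF d])
  have "\<exists>x\<in>{0<..<t}. norm (F t - F 0) \<le> norm ((\<lambda>h. h *\<^sub>R (exp (- (complex_of_real x * r)) * g x)) (t - 0))"
  proof (rule mvt_general[OF tp])
    show "continuous_on {0..t} F"
      by (rule continuous_on_vector_derivative, rule has_vector_derivative_at_within, rule dF)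
    fix x assume "0 < x" "x < t"
    show "(F has_derivative (\<lambda>h. h *\<^sub>R (exp (- (complex_of_real x * r)) * g x))) (at x)"
      using dF[of x] by (simp add: has_vector_derivative_def)
  qed
  then obtain x where x: "0 < x" "x < t"
    and mv: "norm (F t - F 0) \<le> t * (exp (- (x * Re r)) * cmod (g x))"
    by (auto simp: norm_mult abs_of_pos)
  have "exp (- (x * Re r)) * cmod (g x) \<le> exp (- (x * Re r)) * (C * (1 + x) ^ k * exp (a * x))"
    using gb[of x] x by (intro mult_left_mono) auto
  also have "\<dots> = C * (1 + x) ^ k * exp ((a - Re r) * x)"
  proof -
    have "(a - Re r) * x = a * x + (- (x * Re r))" by (simp add: algebra_simps)
    then have "exp ((a - Re r) * x) = exp (a * x) * exp (- (x * Re r))"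
      by (metis exp_add)
    then show ?thesis by (simp add: mult_ac)
  qed
  also have "\<dots> \<le> C * (1 + t) ^ k * exp ((a - Re r) * t)"
  proof -
    have p: "(1 + x) ^ k \<le> (1 + t) ^ k" using x by (intro power_mono) auto
    have "(a - Re r) * x \<le> (a - Re r) * t" using ra x by (intro mult_left_mono) auto
    then have q: "exp ((a - Re r) * x) \<le> exp ((a - Re r) * t)" by simp
    show ?thesis by (rule mult_mono[OF mult_left_mono[OF p C] q]) (use C t in auto)
  qed
  finally have gF: "norm (F t - F 0) \<le> t * (C * (1 + t) ^ k * exp ((a - Re r) * t))"
    using mv tp by (meson mult_left_mono less_imp_le order_trans)
  have "f t = exp (complex_of_real t * r) * F t" unfolding F_def by (rule exp_cancel[symmetric])
  then have "cmod (f t) = exp (t * Re r) * cmod (F t)" by (simp add: norm_mult)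
  also have "\<dots> \<le> exp (t * Re r) * (cmod (F 0) + t * (C * (1 + t) ^ k * exp ((a - Re r) * t)))"
    using gF norm_triangle_ineq2[of "F t" "F 0"] by (intro mult_left_mono) auto
  also have "\<dots> = exp (t * Re r) * cmod (f 0) + t * C * (1 + t) ^ k * exp (a * t)"
  proof -
    have "t * Re r + (a - Re r) * t = a * t" by (simp add: algebra_simps)
    then have ee: "exp (t * Re r) * exp ((a - Re r) * t) = exp (a * t)" by (metis exp_add)
    have "F 0 = f 0" by (simp add: F_def)
    then show ?thesis by (simp add: distrib_left ee[symmetric] mult_ac)
  qed
  also have "\<dots> \<le> exp (a * t) * cmod (f 0) * (1 + t) ^ Suc k + C * (1 + t) ^ Suc k * exp (a * t)"
  proof (rule add_mono)
    have "exp (t * Re r) \<le> exp (a * t)" using mult_right_mono[OF ra t] by (simp add: mult.commute)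
    moreover have h1: "1 \<le> (1 + t) ^ Suc k" by (rule one_le_power) (use t in simp)
    ultimately have e1: "exp (t * Re r) * cmod (f 0) \<le> exp (a * t) * cmod (f 0)"
      by (simp add: mult_right_mono)
    have e2: "exp (a * t) * cmod (f 0) * 1 \<le> exp (a * t) * cmod (f 0) * (1 + t) ^ Suc k"
      by (rule mult_left_mono[OF h1]) simp
    show "exp (t * Re r) * cmod (f 0) \<le> exp (a * t) * cmod (f 0) * (1 + t) ^ Suc k"
      by (rule order_trans[OF e1]) (use e2 in simp)
    have "C * (t * (1 + t) ^ k) \<le> C * ((1 + t) * (1 + t) ^ k)"
      using t C by (intro mult_left_mono mult_right_mono) auto
    then have "t * C * (1 + t) ^ k \<le> C * (1 + t) ^ Suc k" by (simp add: mult_ac)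
    then show "t * C * (1 + t) ^ k * exp (a * t) \<le> C * (1 + t) ^ Suc k * exp (a * t)" by (rule mult_right_mono) simp
  qed
  also have "\<dots> = (cmod (f 0) + C) * (1 + t) ^ Suc k * exp (a * t)" by (simp add: algebra_simps)
  finally show ?thesis .
qed

section \<open>Polynomial action on vectors\<close>

definition pv :: "complex poly \<Rightarrow> complex^'n^'n \<Rightarrow> complex^'n \<Rightarrow> complex^'n" where
  "pv p B h = (\<Sum>k\<le>degree p. coeff p k *s (matpow B k *v h))"

lemma pv_ext: assumes "degree p \<le> d"
  shows "pv p B h = (\<Sum>k\<le>d. coeff p k *s (matpow B k *v h))"
  unfolding pv_def
proof (rule sum.mono_neutral_left)
  show "\<forall>i\<in>{..d} - {..degree p}. coeff p i *s (matpow B i *v h) = 0"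
    using assms by (auto simp: coeff_eq_0)
qed (use assms in auto)

lemma pv_0 [simp]: "pv 0 B h = 0"
  by (simp add: pv_def)

lemma pv_add: "pv (p + q) B h = pv p B h + pv q B h"
proof -
  let ?d = "max (degree p) (degree q)"
  have "pv (p + q) B h = (\<Sum>k\<le>?d. coeff (p + q) k *s (matpow B k *v h))"
    by (rule pv_ext) (simp add: degree_add_le)
  also have "\<dots> = (\<Sum>k\<le>?d. coeff p k *s (matpow B k *v h)) + (\<Sum>k\<le>?d. coeff q k *s (matpow B k *v h))"
    by (simp add: vector_sadd_rdistrib sum.distrib)
  also have "\<dots> = pv p B h + pv q B h"
    by (simp add: pv_ext[symmetric])
  finally show ?thesis .
qed

lemma pv_smult: "pv (smult a p) B h = a *s pv p B h"
proof -
  have "pv (smult a p) B h = (\<Sum>k\<le>degree p. coeff (smult a p) k *s (matpow B k *v h))"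
    by (rule pv_ext) (rule degree_smult_le)
  also have "\<dots> = a *s pv p B h"
    by (simp add: pv_def vec.scale_sum_right vector_smult_assoc)
  finally show ?thesis .
qed

lemma mv_sum: "B *v (\<Sum>k\<in>S. f k) = (\<Sum>k\<in>S. B *v f k)"
  by (induction S rule: infinite_finite_induct) (auto simp: matrix_vector_right_distrib)

lemma pv_pCons: "pv (pCons a p) B h = a *s h + B *v pv p B h"
proof -
  have "pv (pCons a p) B h = (\<Sum>k\<le>Suc (degree p). coeff (pCons a p) k *s (matpow B k *v h))"
    by (rule pv_ext) (simp add: degree_pCons_le)
  also have "\<dots> = a *s h + (\<Sum>k\<le>degree p. coeff p k *s (matpow B (Suc k) *v h))"
    by (subst sum.atMost_Suc_shift) (simp add: matrix_vector_mul_lid)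
  also have "(\<Sum>k\<le>degree p. coeff p k *s (matpow B (Suc k) *v h)) = B *v pv p B h"
    by (simp add: pv_def mv_sum vector_scalar_commute matrix_vector_mul_assoc)
  finally show ?thesis .
qed

lemma pv_zero_vec [simp]: "pv p B 0 = 0"
  by (simp add: pv_def)

lemma pv_mult: "pv (p * q) B h = pv p B (pv q B h)"
proof (induction p rule: pCons_induct)
  case 0 then show ?case by simp
next
  case (pCons a p)
  have "pv (pCons a p * q) B h = pv (smult a q) B h + pv (pCons 0 (p * q)) B h"
    by (simp add: pv_add)
  also have "\<dots> = a *s pv q B h + B *v pv p B (pv q B h)"
    by (simp add: pv_smult pv_pCons pCons.IH)
  also have "\<dots> = pv (pCons a p) B (pv q B h)"
    by (simp add: pv_pCons)
  finally show ?case .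
qed

lemma pv_const: "pv [:c:] B h = c *s h"
  by (simp add: pv_def matrix_vector_mul_lid)

lemma pv_lin: "pv [:-c, 1:] B h = B *v h - c *s h"
proof -
  have e: "pv [:-c,1:] B h = (-c) *s h + B *v h"
    using pv_pCons[of "-c" "[:1:]" B h] pv_const[of 1 B h] by simp
  show ?thesis unfolding e by (simp add: vec_eq_iff)
qed

lemma pv_one: "pv 1 B h = h"
  using pv_const[of 1 B h] by (simp add: one_pCons)

lemma pv_monom: "pv (monom c k) B h = c *s (matpow B k *v h)"
proof -
  have "pv (monom c k) B h = (\<Sum>j\<le>k. coeff (monom c k) j *s (matpow B j *v h))"
    by (rule pv_ext) (rule degree_monom_le)
  also have "\<dots> = c *s (matpow B k *v h)"
    by (simp add: if_distrib[of "\<lambda>x. x *s _"] cong: if_cong)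
  finally show ?thesis .
qed

lemma pv_sum: "pv (\<Sum>k\<in>S. f k) B h = (\<Sum>k\<in>S. pv (f k) B h)"
  by (induction S rule: infinite_finite_induct) (auto simp: pv_add)

lemma rowmul_mv: "rowmul w (B *v y) = rowmul (w v* B) y"
  unfolding rowmul_def matrix_vector_mult_def vector_matrix_mult_def
  by (simp add: sum_distrib_left sum_distrib_right mult_ac) (rule sum.swap)

lemma rowmul_add: "rowmul w (x + y) = rowmul w x + rowmul w y"
  by (simp add: rowmul_def distrib_left sum.distrib)

lemma rowmul_smult: "rowmul w (c *s x) = c * rowmul w x"
  by (simp add: rowmul_def sum_distrib_left mult_ac)

lemma rowmul_smult_left: "rowmul (c *s w) x = c * rowmul w x"
  by (simp add: rowmul_def sum_distrib_left mult_ac)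

lemma rowmul_diff: "rowmul w (x - y) = rowmul w x - rowmul w y"
  by (simp add: rowmul_def right_diff_distrib sum_subtractf)

lemma pv_left_eig:
  assumes "w v* B = l *s w"
  shows "rowmul w (pv p B h) = poly p l * rowmul w h"
proof (induction p rule: pCons_induct)
  case 0 then show ?case by (simp add: rowmul_def)
next
  case (pCons a p)
  then show ?case
    by (simp add: pv_pCons rowmul_add rowmul_smult rowmul_smult_left rowmul_mv assms algebra_simps)
qed

lemma pv_right_eig:
  assumes "B *v e = l *s e"
  shows "pv p B e = poly p l *s e"
proof (induction p rule: pCons_induct)
  case 0 then show ?case by simp
next
  case (pCons a p)
  then show ?case
    by (simp add: pv_pCons vector_scalar_commute assms vector_smult_assoc vector_sadd_rdistrib algebra_simps)
qed

lemma pv_diff: "pv (p - q) B h = pv p B h - pv q B h"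
  using pv_add[of "p - q" q B h] by (simp add: algebra_simps)

lemma annih_exists: fixes B :: "complex^'n^'n" shows "\<exists>p. p \<noteq> 0 \<and> pv p B h = 0"
proof -
  define n where "n = CARD('n)"
  define v where "v k = matpow B k *v h" for k
  show ?thesis
  proof (cases "inj_on v {..n}")
    case False
    then obtain i j where ij: "i \<noteq> j" "v i = v j" unfolding inj_on_def by blast
    let ?p = "monom (1::complex) i - monom 1 j"
    have "coeff ?p i = 1" using ij by simp
    then have "?p \<noteq> 0" by (metis coeff_0 zero_neq_one)
    moreover have "pv ?p B h = 0" using ij by (simp add: pv_diff pv_monom v_def)
    ultimately show ?thesis by blast
  next
    case True
    define S where "S = v ` {..n}"
    have fS: "finite S" unfolding S_def by simp
    have cS: "card S = Suc n" unfolding S_def using True by (simp add: card_image)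
    have "vec.dim S \<le> n" unfolding n_def using dim_subset_UNIV_cart_gen[of S] by simp
    then have "vec.dependent S" using cS by (intro vec.dependent_biggerset_general) simp
    then obtain u where u: "\<exists>x\<in>S. u x \<noteq> 0" "(\<Sum>x\<in>S. u x *s x) = 0"
      using vec.dependent_finite[OF fS] by blast
    define p where "p = (\<Sum>k\<le>n. monom (u (v k)) k)"
    have cp: "k \<le> n \<Longrightarrow> coeff p k = u (v k)" for k
      unfolding p_def by (rule coeff_sum_monom)
    have "pv p B h = (\<Sum>k\<le>n. u (v k) *s v k)"
      unfolding p_def pv_sum pv_monom v_def ..
    also have "\<dots> = (\<Sum>x\<in>S. u x *s x)"
      unfolding S_def using sum.reindex[OF True, of "\<lambda>x. u x *s x"] by simp
    finally have "pv p B h = 0" using u(2) by simp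
    moreover have "p \<noteq> 0"
    proof
      assume "p = 0"
      from u(1) obtain k where "k \<le> n" "u (v k) \<noteq> 0" unfolding S_def by auto
      with cp[of k] \<open>p = 0\<close> show False by simp
    qed
    ultimately show ?thesis by blast
  qed
qed

lemma min_annih: "\<exists>p. p \<noteq> 0 \<and> pv p B h = 0 \<and> (\<forall>q. q \<noteq> 0 \<and> pv q B h = 0 \<longrightarrow> degree p \<le> degree q)"
proof -
  obtain p0 where "p0 \<noteq> 0 \<and> pv p0 B h = 0" using annih_exists by blast
  then show ?thesis using ex_has_least_nat[of "\<lambda>p. p \<noteq> 0 \<and> pv p B h = 0" p0 degree] by blast
qed

lemma root_eigen:
  assumes p: "p \<noteq> 0" "pv p B h = 0" "\<forall>q. q \<noteq> 0 \<and> pv q B h = 0 \<longrightarrow> degree p \<le> degree q"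
    and r: "poly p r = 0"
  shows "\<exists>s. pv s B h \<noteq> 0 \<and> B *v pv s B h = r *s pv s B h"
proof -
  obtain s where ps: "p = [:-r, 1:] * s" using r poly_eq_0_iff_dvd by (metis dvdE)
  then have s0: "s \<noteq> 0" using p(1) by auto
  have "degree p = Suc (degree s)" unfolding ps using s0 by (subst degree_mult_eq) auto
  then have "pv s B h \<noteq> 0" using p(3) s0 by (metis Suc_n_not_le_n)
  moreover have "pv [:-r, 1:] B (pv s B h) = 0" using p(2) unfolding ps pv_mult .
  then have "B *v pv s B h = r *s pv s B h" unfolding pv_lin by simp
  ultimately show ?thesis by blast
qed

lemma poly_det: "poly (det M) r = det (\<chi> i j. poly (M $ i $ j) r)"
  unfolding det_def by (simp add: poly_sum poly_prod)

lemma charpoly_eval: "poly (charpoly A) r = det (mat r - cmat A)"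
  unfolding charpoly_def poly_det
  by (rule arg_cong[of _ _ det]) (simp add: vec_eq_iff mat_def cmat_def)

lemma mat_mv: "mat r *v x = r *s x"
  by (simp add: vec_eq_iff matrix_vector_mult_def mat_def if_distrib[of "\<lambda>y. y * _"] cong: if_cong)

lemma eig_root:
  assumes "cmat A *v e = r *s e" "e \<noteq> 0"
  shows "poly (charpoly A) r = 0"
proof (rule ccontr)
  assume "poly (charpoly A) r \<noteq> 0"
  then have "invertible (mat r - cmat A)" unfolding charpoly_eval by (simp add: invertible_det_nz)
  then obtain N where N: "N ** (mat r - cmat A) = mat 1" unfolding invertible_def by blast
  have "(mat r - cmat A) *v e = 0" using assms(1) by (simp add: matrix_vector_mult_diff_rdistrib mat_mv)
  then have "N *v ((mat r - cmat A) *v e) = 0" by simp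
  then have "e = 0" unfolding matrix_vector_mul_assoc N by (simp add: matrix_vector_mul_lid)
  with assms(2) show False by simp
qed

lemma det_row_comb:
  fixes Z :: "'a::comm_ring_1^'n^'n"
  shows "c k * det Z = det (\<chi> i. if i = k then (\<Sum>j\<in>UNIV. c j *s row j Z) else row i Z)"
proof -
  have "det (\<chi> i. if i = k then (\<Sum>j\<in>UNIV. c j *s row j Z) else row i Z) =
      (\<Sum>j\<in>UNIV. det (\<chi> i. if i = k then c j *s row j Z else row i Z))"
    by (rule det_linear_row_sum) simp
  also have "\<dots> = (\<Sum>j\<in>UNIV. c j * det (\<chi> i. if i = k then row j Z else row i Z))"
    by (rule sum.cong[OF refl], rule det_row_mul)
  also have "\<dots> = (\<Sum>j\<in>UNIV. if j = k then c k * det Z else 0)"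
  proof (rule sum.cong[OF refl])
    fix j
    show "c j * det (\<chi> i. if i = k then row j Z else row i Z) = (if j = k then c k * det Z else 0)"
    proof (cases "j = k")
      case True
      have "(\<chi> i. if i = k then row j Z else row i Z) = Z" using True by (simp add: vec_eq_iff row_def)
      then show ?thesis using True by simp
    next
      case False
      have "det (\<chi> i. if i = k then row j Z else row i Z) = 0"
        by (rule det_identical_rows[of k j]) (use False in \<open>auto simp: row_def vec_eq_iff\<close>)
      then show ?thesis using False by simp
    qed
  qed
  also have "\<dots> = c k * det Z" by simp
  finally show ?thesis by simp
qed

lemma sum_pconst: "(\<Sum>j\<in>S. [:f j:]) = [:\<Sum>j\<in>S. f j:]"
  by (induction S rule: infinite_finite_induct) auto

definition CM :: "real^'n^'n \<Rightarrow> complex poly^'n^'n" where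
  "CM A = (\<chi> i j. (if i = j then [:0, 1:] else 0) - [: complex_of_real (A $ i $ j) :])"

lemma charpoly_CM: "charpoly A = det (CM A)"
  unfolding charpoly_def CM_def ..

lemma left_right_zero_dvd:
  assumes w: "w \<noteq> 0" "w v* cmat A = l *s w"
    and e: "e \<noteq> 0" "cmat A *v e = l *s e"
    and we: "rowmul w e = 0"
  shows "[:-l, 1:] ^ 2 dvd charpoly A"
proof -
  obtain i1 where i1: "w $ i1 \<noteq> 0" using w(1) by (metis vec_eq_iff zero_index)
  obtain i0 where i0: "e $ i0 \<noteq> 0" using e(1) by (metis vec_eq_iff zero_index)
  let ?M = "CM A"
  define wh where "wh = (\<chi> j. [: w $ j :])"
  define eh where "eh = (\<chi> j. [: e $ j :])"
  have wA: "(\<Sum>j\<in>UNIV. w $ j * complex_of_real (A $ j $ m)) = l * w $ m" for m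
    using w(2) by (simp add: vec_eq_iff vector_matrix_mult_def cmat_def)
  have Ae: "(\<Sum>j\<in>UNIV. complex_of_real (A $ m $ j) * e $ j) = l * e $ m" for m
    using e(2) by (simp add: vec_eq_iff matrix_vector_mult_def cmat_def)
  have rowsum: "(\<Sum>j\<in>UNIV. [:w $ j:] *s row j ?M) = [:-l, 1:] *s wh"
  proof -
    have "(\<Sum>j\<in>UNIV. [:w $ j:] * ?M $ j $ m) = [:-l, 1:] * [:w $ m:]" for m
    proof -
      have t: "[:w $ j:] * ?M $ j $ m = (if j = m then [:0, w $ m:] else 0) - [:w $ j * complex_of_real (A $ j $ m):]" for j
        by (simp add: CM_def)
      have "(\<Sum>j\<in>UNIV. [:w $ j:] * ?M $ j $ m) =
          (\<Sum>j\<in>UNIV. (if j = m then [:0, w $ m:] else 0)) - (\<Sum>j\<in>UNIV. [:w $ j * complex_of_real (A $ j $ m):])"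
        unfolding t by (rule sum_subtractf)
      also have "\<dots> = [:0, w $ m:] - [:l * w $ m:]"
        by (simp add: sum_pconst wA)
      also have "\<dots> = [:-l, 1:] * [:w $ m:]" by simp
      finally show ?thesis .
    qed
    then show ?thesis by (simp add: vec_eq_iff wh_def row_def sum_component)
  qed
  define M1 where "M1 = (\<chi> i. if i = i1 then wh else row i ?M)"
  have step1: "[:w $ i1:] * det ?M = [:-l, 1:] * det M1"
    unfolding det_row_comb[of "\<lambda>j. [:w $ j:]" i1] rowsum M1_def
    using det_row_mul[of i1 "[:-l, 1:]" "\<lambda>i. wh" "\<lambda>i. row i ?M"] by simp
  define v' where "v' = (\<chi> i. if i = i1 then 0 else [: e $ i :])"
  have colsum: "(\<Sum>j\<in>UNIV. [:e $ j:] *s row j (transpose M1)) = [:-l, 1:] *s v'"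
  proof -
    have "(\<Sum>j\<in>UNIV. [:e $ j:] * M1 $ m $ j) = [:-l, 1:] * v' $ m" for m
    proof (cases "m = i1")
      case True
      have "(\<Sum>j\<in>UNIV. [:e $ j:] * M1 $ m $ j) = (\<Sum>j\<in>UNIV. [:w $ j * e $ j:])"
        using True by (simp add: M1_def wh_def mult.commute)
      also have "\<dots> = 0" using we by (simp add: sum_pconst rowmul_def)
      finally show ?thesis using True by (simp add: v'_def)
    next
      case False
      have t: "[:e $ j:] * M1 $ m $ j = (if j = m then [:0, e $ m:] else 0) - [:complex_of_real (A $ m $ j) * e $ j:]" for j
        using False by (auto simp: M1_def CM_def row_def mult.commute)
      have "(\<Sum>j\<in>UNIV. [:e $ j:] * M1 $ m $ j) =
          (\<Sum>j\<in>UNIV. (if j = m then [:0, e $ m:] else 0)) - (\<Sum>j\<in>UNIV. [:complex_of_real (A $ m $ j) * e $ j:])"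
        unfolding t by (rule sum_subtractf)
      also have "\<dots> = [:0, e $ m:] - [:l * e $ m:]"
        by (simp add: sum_pconst Ae)
      also have "\<dots> = [:-l, 1:] * v' $ m" using False by (simp add: v'_def)
      finally show ?thesis .
    qed
    then show ?thesis by (simp add: vec_eq_iff row_def sum_component transpose_def)
  qed
  define M2 where "M2 = (\<chi> i. if i = i0 then v' else row i (transpose M1))"
  have step2: "[:e $ i0:] * det M1 = [:-l, 1:] * det M2"
  proof -
    have "[:e $ i0:] * det M1 = [:e $ i0:] * det (transpose M1)" by simp
    also have "\<dots> = [:-l, 1:] * det M2"
      unfolding det_row_comb[of "\<lambda>j. [:e $ j:]" i0] colsum M2_def
      using det_row_mul[of i0 "[:-l, 1:]" "\<lambda>i. v'" "\<lambda>i. row i (transpose M1)"] by simp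
    finally show ?thesis .
  qed
  have "smult (w $ i1 * e $ i0) (charpoly A) = [:w $ i1:] * ([:e $ i0:] * det ?M)"
    unfolding charpoly_CM by (simp add: mult_ac)
  also have "\<dots> = [:e $ i0:] * ([:w $ i1:] * det ?M)" by (simp add: mult_ac)
  also have "\<dots> = [:-l, 1:] * ([:e $ i0:] * det M1)" unfolding step1 by (rule mult.left_commute)
  also have "\<dots> = [:-l, 1:] ^ 2 * det M2" unfolding step2 by (simp only: power2_eq_square mult.assoc)
  finally have "[:-l, 1:] ^ 2 dvd smult (w $ i1 * e $ i0) (charpoly A)" by simp
  then show ?thesis by (rule dvd_smult_cancel) (use i0 i1 in simp)
qed

lemma XX_lin: "XX A t *v (x - c *s y) = XX A t *v x - c *s (XX A t *v y)"
  by (simp add: matrix_vector_mult_diff_distrib vector_scalar_commute)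

lemma decay_list:
  fixes A :: "real^'n^'n"
  assumes "pv (\<Prod>x\<leftarrow>L. [:-x, 1:]) (cmat A) h = 0" "\<forall>a\<in>set L. Re a \<le> \<alpha>"
  shows "\<exists>C\<ge>0. \<forall>t\<ge>0. \<forall>i. cmod ((XX A t *v h) $ i) \<le> C * (1 + t) ^ length L * exp (\<alpha> * t)"
  using assms
proof (induction L arbitrary: h)
  case Nil
  then have "h = 0" by (simp add: pv_one)
  then show ?case by (intro exI[of _ 0]) simp
next
  case (Cons a L)
  define h' where "h' = cmat A *v h - a *s h"
  have "pv (\<Prod>x\<leftarrow>L. [:-x, 1:]) (cmat A) h' = pv ((\<Prod>x\<leftarrow>L. [:-x, 1:]) * [:-a, 1:]) (cmat A) h"
    unfolding pv_mult h'_def pv_lin ..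
  also have "\<dots> = 0" using Cons.prems(1) by (simp add: mult.commute)
  finally obtain C' where C': "C' \<ge> 0" "\<And>t i. t \<ge> 0 \<Longrightarrow> cmod ((XX A t *v h') $ i) \<le> C' * (1 + t) ^ length L * exp (\<alpha> * t)"
    using Cons.IH Cons.prems(2) by force
  define C where "C = (\<Sum>i\<in>UNIV. cmod (h $ i)) + C'"
  have "cmod ((XX A t *v h) $ i) \<le> C * (1 + t) ^ length (a # L) * exp (\<alpha> * t)" if t: "t \<ge> 0" for t i
  proof -
    let ?f = "\<lambda>t. (XX A t *v h) $ i"
    let ?g = "\<lambda>t. (XX A t *v h') $ i"
    have d: "(?f has_vector_derivative (a * ?f t + ?g t)) (at t)" for t
    proof -
      have "(XX A t *v (cmat A *v h)) $ i = a * ?f t + ?g t"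
        unfolding h'_def XX_lin by simp
      then show ?thesis using XX_deriv[of A h i t] by simp
    qed
    have "cmod (?f t) \<le> (cmod (?f 0) + C') * (1 + t) ^ Suc (length L) * exp (\<alpha> * t)"
      by (rule ode_bound[OF d C'(2) _ C'(1) t]) (use Cons.prems(2) in auto)
    also have "cmod (?f 0) = cmod (h $ i)" by (simp add: XX_zero matrix_vector_mul_lid)
    also have "cmod (h $ i) \<le> (\<Sum>i\<in>UNIV. cmod (h $ i))" by (rule member_le_sum) auto
    finally show ?thesis unfolding C_def using t by (simp add: mult_right_mono)
  qed
  moreover have "C \<ge> 0" unfolding C_def using C'(1) by (simp add: sum_nonneg)
  ultimately show ?case by blast
qed

definition vcnj :: "complex^'n \<Rightarrow> complex^'n" where
  "vcnj x = (\<chi> i. cnj (x $ i))"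

lemma vcnj_vcnj [simp]: "vcnj (vcnj x) = x"
  by (simp add: vcnj_def vec_eq_iff)

lemma vcnj_eq0 [simp]: "vcnj x = 0 \<longleftrightarrow> x = 0"
  by (simp add: vcnj_def vec_eq_iff)

lemma rowmul_vcnj: "rowmul (vcnj a) (vcnj b) = cnj (rowmul a b)"
  by (simp add: rowmul_def vcnj_def)

lemma vcnj_right: assumes "cmat A *v e = l *s e" shows "cmat A *v vcnj e = cnj l *s vcnj e"
proof -
  have "(cmat A *v vcnj e) $ i = cnj ((cmat A *v e) $ i)" for i
    by (simp add: matrix_vector_mult_def cmat_def vcnj_def cnj_sum)
  then show ?thesis using assms by (simp add: vec_eq_iff vcnj_def)
qed

lemma vcnj_left: assumes "w v* cmat A = l *s w" shows "vcnj w v* cmat A = cnj l *s vcnj w"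
proof -
  have "(vcnj w v* cmat A) $ i = cnj ((w v* cmat A) $ i)" for i
    by (simp add: vector_matrix_mult_def cmat_def vcnj_def cnj_sum)
  then show ?thesis using assms by (simp add: vec_eq_iff vcnj_def)
qed

lemma vcnj_cvec [simp]: "vcnj (cvec y) = cvec y"
  by (simp add: vcnj_def cvec_def vec_eq_iff)

locale spec =
  fixes N :: "complex^'n \<Rightarrow> real" and A :: "real^'n^'n" and lam :: complex and w v :: "complex^'n"
  assumes norm: "is_cnorm N"
    and Lam: "Lambda1 A = {lam, cnj lam}"
    and im_pos: "Im lam > 0"
    and simple1: "simple_eigenvalue A lam"
    and wl: "left_eigvec A lam w"
    and vr: "right_eigvec A lam v"
    and wv_real: "Im (rowmul w v) = 0"
begin

lemma w0: "w \<noteq> 0" and wA: "w v* cmat A = lam *s w"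
  using wl by (auto simp: left_eigvec_def)

lemma v0: "v \<noteq> 0" and Av: "cmat A *v v = lam *s v"
  using vr by (auto simp: right_eigvec_def)

lemma lam_ne: "lam \<noteq> cnj lam"
  using im_pos by (metis complex_cnj_cancel_iff less_irrefl complex.sel(2) cnj.simps(2) neg_equal_zero)

lemma lam_in: "lam \<in> Lambda1 A" using Lam by simp

lemma Re_le: "poly (charpoly A) r = 0 \<Longrightarrow> Re r \<le> Re lam"
  using lam_in unfolding Lambda1_def eigenvalues_def by auto

lemma charpoly_nz: "charpoly A \<noteq> 0"
proof
  assume "charpoly A = 0"
  then have "Re (lam + 1) \<le> Re lam" using Re_le[of "lam + 1"] by simp
  then show False by simp
qed

lemma nonorth:
  assumes "e \<noteq> 0" "cmat A *v e = lam *s e"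
  shows "rowmul w e \<noteq> 0"
proof
  assume "rowmul w e = 0"
  then have "[:-lam, 1:] ^ 2 dvd charpoly A"
    using left_right_zero_dvd[OF w0 wA assms] by blast
  then have "2 \<le> order lam (charpoly A)" using charpoly_nz by (simp add: order_divides)
  then show False using simple1 unfolding simple_eigenvalue_def by simp
qed

lemma wv_nz: "rowmul w v \<noteq> 0"
  by (rule nonorth[OF v0 Av])

lemma w_vc: "rowmul w (vcnj v) = 0"
proof -
  have "lam * rowmul w (vcnj v) = rowmul (w v* cmat A) (vcnj v)" by (simp add: wA rowmul_smult_left)
  also have "\<dots> = rowmul w (cmat A *v vcnj v)" by (simp add: rowmul_mv)
  also have "\<dots> = cnj lam * rowmul w (vcnj v)" by (simp add: vcnj_right[OF Av] rowmul_smult)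
  finally show ?thesis using lam_ne by (metis mult_cancel_right)
qed

lemma wc_v: "rowmul (vcnj w) v = 0"
  using w_vc rowmul_vcnj[of w "vcnj v"] by simp

lemma decay:
  assumes h1: "rowmul w h = 0" and h2: "rowmul (vcnj w) h = 0"
  shows "\<exists>\<alpha><Re lam. \<exists>C\<ge>0. \<exists>k. \<forall>t\<ge>0. \<forall>i. cmod ((XX A t *v h) $ i) \<le> C * (1 + t) ^ k * exp (\<alpha> * t)"
proof -
  obtain p where p: "p \<noteq> 0" "pv p (cmat A) h = 0" "\<forall>q. q \<noteq> 0 \<and> pv q (cmat A) h = 0 \<longrightarrow> degree p \<le> degree q"
    using min_annih by blast
  have roots: "Re r < Re lam" if r: "poly p r = 0" for r
  proof -
    obtain s where s: "pv s (cmat A) h \<noteq> 0" "cmat A *v pv s (cmat A) h = r *s pv s (cmat A) h"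
      using root_eigen[OF p r] by blast
    define e where "e = pv s (cmat A) h"
    have e0: "e \<noteq> 0" and Ae: "cmat A *v e = r *s e" using s e_def by auto
    have we: "rowmul w e = 0" unfolding e_def using pv_left_eig[OF wA] h1 by simp
    have wce: "rowmul (vcnj w) e = 0" unfolding e_def using pv_left_eig[OF vcnj_left[OF wA]] h2 by simp
    have cr: "poly (charpoly A) r = 0" by (rule eig_root[OF Ae e0])
    have "Re r \<le> Re lam" by (rule Re_le[OF cr])
    moreover have "Re r \<noteq> Re lam"
    proof
      assume eq: "Re r = Re lam"
      have "r \<in> Lambda1 A"
        using cr eq lam_in unfolding Lambda1_def eigenvalues_def by auto
      then have "r = lam \<or> r = cnj lam" using Lam by simp
      then show False
      proof
        assume "r = lam" then show False using nonorth[OF e0] Ae we by simp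
      next
        assume "r = cnj lam"
        then have "cmat A *v vcnj e = lam *s vcnj e" using vcnj_right[OF Ae] by simp
        moreover have "rowmul w (vcnj e) = 0" using rowmul_vcnj[of "vcnj w" e] wce by simp
        ultimately show False using nonorth[of "vcnj e"] e0 by simp
      qed
    qed
    ultimately show ?thesis by simp
  qed
  obtain L where L: "mset L = proots p" using ex_mset by blast
  have pL: "p = smult (lead_coeff p) (\<Prod>x\<leftarrow>L. [:-x, 1:])"
  proof -
    have "p = smult (lead_coeff p) (\<Prod>x\<in>#proots p. [:-x, 1:])"
      by (rule complex_poly_decompose_multiset[symmetric])
    also have "(\<Prod>x\<in>#proots p. [:-x, 1:]) = (\<Prod>x\<leftarrow>L. [:-x, 1:])"
      by (subst prod_mset_prod_list[symmetric]) (simp add: L)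
    finally show ?thesis .
  qed
  have Lr: "x \<in> set L \<Longrightarrow> poly p x = 0" for x
    using L p(1) by (metis set_mset_mset set_count_proots mem_Collect_eq)
  define \<alpha> where "\<alpha> = Max (insert (Re lam - 1) (Re ` set L))"
  have al: "\<alpha> < Re lam" unfolding \<alpha>_def using roots Lr by (auto simp: Max_less_iff)
  have aL: "\<forall>a\<in>set L. Re a \<le> \<alpha>" unfolding \<alpha>_def by auto
  have "pv (\<Prod>x\<leftarrow>L. [:-x, 1:]) (cmat A) h = 0"
  proof -
    have "lead_coeff p \<noteq> 0" using p(1) by simp
    moreover have "lead_coeff p *s pv (\<Prod>x\<leftarrow>L. [:-x, 1:]) (cmat A) h = 0"
      using p(2) pL pv_smult by metis
    ultimately show ?thesis by (simp add: vec_eq_iff)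
  qed
  from decay_list[OF this aL] al show ?thesis by blast
qed

end

lemma cvec_add: "cvec (x + y) = cvec x + cvec y"
  by (simp add: cvec_def vec_eq_iff)

lemma cvec_diff: "cvec (x - y) = cvec x - cvec y"
  by (simp add: cvec_def vec_eq_iff)

lemma cvec_scaleR: "cvec (c *\<^sub>R x) = complex_of_real c *s cvec x"
  by (simp add: cvec_def vec_eq_iff)

lemma cvec_eq0: "cvec x = 0 \<longleftrightarrow> x = 0"
  by (simp add: cvec_def vec_eq_iff)

lemma cvec_mat_diff: "cvec ((M - M') *v x) = cvec (M *v x) - cvec (M' *v x)"
  by (simp add: matrix_vector_mult_diff_rdistrib cvec_diff)

lemma cvec_mat_scaleR: "cvec ((c *\<^sub>R M) *v x) = complex_of_real c *s cvec (M *v x)"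
  by (simp add: cvec_def vec_eq_iff matrix_vector_mult_def sum_distrib_left mult_ac)

context
  fixes N :: "complex^'n \<Rightarrow> real"
  assumes norm: "is_cnorm N"
begin

lemma rn_nonneg: "rnorm N x \<ge> 0"
  unfolding rnorm_def by (rule cn_nonneg[OF norm])

lemma rn_eq0: "rnorm N x = 0 \<longleftrightarrow> x = 0"
  unfolding rnorm_def using cn_eq0[OF norm] cvec_eq0 by blast

lemma rn_scale: "rnorm N (c *\<^sub>R x) = \<bar>c\<bar> * rnorm N x"
  unfolding rnorm_def cvec_scaleR cn_smult[OF norm] by simp

lemma rn_tri: "rnorm N (x + y) \<le> rnorm N x + rnorm N y"
  unfolding rnorm_def cvec_add by (rule cn_tri[OF norm])

end

definition cm :: "(complex^'n \<Rightarrow> real) \<Rightarrow> real" where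
  "cm N = (SOME m. m > 0 \<and> (\<forall>x. m * norm x \<le> N x))"

context
  fixes N :: "complex^'n \<Rightarrow> real"
  assumes norm: "is_cnorm N"
begin

lemma cm: "cm N > 0" "cm N * norm x \<le> N x"
proof -
  have "cm N > 0 \<and> (\<forall>x. cm N * norm x \<le> N x)"
    unfolding cm_def by (rule someI_ex) (rule cn_lower[OF norm])
  then show "cm N > 0" "cm N * norm x \<le> N x" by auto
qed

lemma comp_le: "cmod (u $ j) \<le> N u / cm N"
proof -
  have "cmod (u $ j) \<le> norm u" by (rule Finite_Cartesian_Product.norm_nth_le)
  also have "\<dots> \<le> N u / cm N" using cm(2)[of u] by (simp add: pos_le_divide_eq[OF cm(1)] mult.commute)
  finally show ?thesis .
qed

lemma rcomp_le: "\<bar>x $ j\<bar> \<le> rnorm N x / cm N"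
  using comp_le[of "cvec x" j] by (simp add: rnorm_def cvec_def)

lemma rn_mv_bound: "rnorm N (M *v x) \<le> cnB N * ((\<Sum>i\<in>UNIV. \<Sum>j\<in>UNIV. \<bar>M $ i $ j\<bar>) * (rnorm N x / cm N))"
proof -
  have "rnorm N (M *v x) \<le> cnB N * (\<Sum>i\<in>UNIV. cmod (cvec (M *v x) $ i))"
    unfolding rnorm_def by (rule cn_upper[OF norm])
  also have "\<dots> \<le> cnB N * ((\<Sum>i\<in>UNIV. \<Sum>j\<in>UNIV. \<bar>M $ i $ j\<bar>) * (rnorm N x / cm N))"
  proof (rule mult_left_mono[OF _ cnB_nonneg[OF norm]])
    have "cmod (cvec (M *v x) $ i) \<le> (\<Sum>j\<in>UNIV. \<bar>M $ i $ j\<bar>) * (rnorm N x / cm N)" for i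
    proof -
      have "cmod (cvec (M *v x) $ i) = \<bar>(M *v x) $ i\<bar>"
        by (simp add: cvec_def)
      also have "\<dots> = \<bar>\<Sum>j\<in>UNIV. M $ i $ j * x $ j\<bar>"
        by (simp add: matrix_vector_mult_def)
      also have "\<dots> \<le> (\<Sum>j\<in>UNIV. \<bar>M $ i $ j\<bar> * \<bar>x $ j\<bar>)"
        by (rule order_trans[OF sum_abs]) (simp add: abs_mult)
      also have "\<dots> \<le> (\<Sum>j\<in>UNIV. \<bar>M $ i $ j\<bar> * (rnorm N x / cm N))"
        by (intro sum_mono mult_left_mono rcomp_le) auto
      finally show ?thesis unfolding sum_distrib_right .
    qed
    then show "(\<Sum>i\<in>UNIV. cmod (cvec (M *v x) $ i)) \<le> (\<Sum>i\<in>UNIV. \<Sum>j\<in>UNIV. \<bar>M $ i $ j\<bar>) * (rnorm N x / cm N)"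
      unfolding sum_distrib_right by (rule sum_mono)
  qed
  finally show ?thesis .
qed

lemma unit_exists: "\<exists>x::real^'n. rnorm N x = 1"
proof -
  obtain i :: 'n where True by blast
  define e :: "real^'n" where "e = axis i 1"
  have "e $ i = 1" unfolding e_def by simp
  then have "e \<noteq> 0" by auto
  then have "rnorm N e \<noteq> 0" using rn_eq0[OF norm, of e] by simp
  then have p: "rnorm N e > 0" using rn_nonneg[OF norm, of e] by linarith
  have "rnorm N ((1 / rnorm N e) *\<^sub>R e) = 1" using p by (simp add: rn_scale[OF norm])
  then show ?thesis by blast
qed

lemma mnorm_bdd: "bdd_above {rnorm N (M *v x) | x. rnorm N x = 1}"
proof -
  let ?b = "cnB N * ((\<Sum>i\<in>UNIV. \<Sum>j\<in>UNIV. \<bar>M $ i $ j\<bar>) * (1 / cm N))"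
  show ?thesis
  proof (rule bdd_aboveI)
    fix y assume "y \<in> {rnorm N (M *v x) | x. rnorm N x = 1}"
    then obtain x where "y = rnorm N (M *v x)" "rnorm N x = 1" by blast
    then show "y \<le> ?b" using rn_mv_bound[of M x] by simp
  qed
qed

lemma mnorm_ge: "rnorm N x = 1 \<Longrightarrow> rnorm N (M *v x) \<le> mnorm N M"
  unfolding mnorm_def by (rule cSup_upper[OF _ mnorm_bdd]) blast

lemma mnorm_le: "(\<And>x. rnorm N x = 1 \<Longrightarrow> rnorm N (M *v x) \<le> b) \<Longrightarrow> mnorm N M \<le> b"
  unfolding mnorm_def using unit_exists by (intro cSup_least) auto

end

lemma poly_exp_decay:
  assumes "\<alpha> < \<mu>"
  shows "((\<lambda>t::real. C * (1 + t) ^ k * exp ((\<alpha> - \<mu>) * t)) \<longlongrightarrow> 0) at_top"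
proof -
  define e where "e = \<mu> - \<alpha>"
  have e: "e > 0" using assms by (simp add: e_def)
  have h: "filterlim (\<lambda>t. e * (1 + t)) at_top at_top"
    using e by real_asymp
  have g: "((\<lambda>t. (e * (1 + t)) ^ k / exp (e * (1 + t))) \<longlongrightarrow> 0) at_top"
    using tendsto_power_div_exp_0[of k] h by (rule filterlim_compose)
  have eq: "C * (1 + t) ^ k * exp ((\<alpha> - \<mu>) * t) =
      (C * exp e / e ^ k) * ((e * (1 + t)) ^ k / exp (e * (1 + t)))" for t
  proof -
    have ex1: "exp (e * (1 + t)) = exp e * exp (e * t)" by (simp add: distrib_left exp_add)
    have ex2: "exp ((\<alpha> - \<mu>) * t) = inverse (exp (e * t))"
      by (simp add: e_def exp_minus[symmetric] algebra_simps)
    have p: "(e * (1 + t)) ^ k = e ^ k * (1 + t) ^ k" by (rule power_mult_distrib)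
    show ?thesis unfolding ex1 ex2 p using e by (simp add: field_simps)
  qed
  show ?thesis unfolding eq using tendsto_mult_left[OF g, of "C * exp e / e ^ k"] by simp
qed

context spec begin

definition c :: complex where "c = rowmul w v"

lemma c0: "c \<noteq> 0" unfolding c_def by (rule wv_nz)

lemma cnj_c: "cnj c = rowmul (vcnj w) (vcnj v)"
  unfolding c_def by (simp add: rowmul_vcnj)

definition Q :: "complex^'n \<Rightarrow> complex^'n" where
  "Q u = u - (rowmul w u / c) *s v - (rowmul (vcnj w) u / cnj c) *s vcnj v"

lemma Q_w: "rowmul w (Q u) = 0"
  unfolding Q_def using c0 w_vc by (simp add: rowmul_diff rowmul_smult c_def[symmetric])

lemma Q_wc: "rowmul (vcnj w) (Q u) = 0"
  unfolding Q_def using c0 wc_v by (simp add: rowmul_diff rowmul_smult cnj_c[symmetric])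

lemma XX_eig:
  assumes "cmat A *v e = l *s e"
  shows "XX A t *v e = exp (complex_of_real t * l) *s e"
proof -
  have "(XX A t *v e) $ i = exp (complex_of_real t * l) * (XX A 0 *v e) $ i" for i
  proof (rule ode_exact)
    fix t
    show "((\<lambda>t. (XX A t *v e) $ i) has_vector_derivative l * (XX A t *v e) $ i) (at t)"
      using XX_deriv[of A e i t] assms by (simp add: vector_scalar_commute)
  qed
  then show ?thesis by (simp add: vec_eq_iff XX_zero matrix_vector_mul_lid)
qed

lemma decomp:
  "XX A t *v u = (exp (complex_of_real t * lam) * (rowmul w u / c)) *s v
     + (exp (complex_of_real t * cnj lam) * (rowmul (vcnj w) u / cnj c)) *s vcnj v + XX A t *v Q u"
proof -
  have u: "u = (rowmul w u / c) *s v + (rowmul (vcnj w) u / cnj c) *s vcnj v + Q u"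
    unfolding Q_def by simp
  have "XX A t *v u = (rowmul w u / c) *s (XX A t *v v) + (rowmul (vcnj w) u / cnj c) *s (XX A t *v vcnj v) + XX A t *v Q u"
    by (subst u) (simp add: matrix_vector_right_distrib vector_scalar_commute)
  also have "\<dots> = (exp (complex_of_real t * lam) * (rowmul w u / c)) *s v
     + (exp (complex_of_real t * cnj lam) * (rowmul (vcnj w) u / cnj c)) *s vcnj v + XX A t *v Q u"
    by (simp add: XX_eig[OF Av] XX_eig[OF vcnj_right[OF Av]] vector_smult_assoc mult_ac)
  finally show ?thesis .
qed

lemma Q_add: "Q (x + y) = Q x + Q y"
  unfolding Q_def by (simp add: rowmul_add add_divide_distrib vector_sadd_rdistrib algebra_simps)

lemma Q_smult: "Q (a *s x) = a *s Q x"
  unfolding Q_def by (simp add: rowmul_smult vector_ssub_ldistrib vector_smult_assoc)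

lemma Q_sum: "Q (\<Sum>l\<in>S. f l) = (\<Sum>l\<in>S. Q (f l))"
proof (induction S rule: infinite_finite_induct)
  case (infinite S) then show ?case using Q_smult[of 0 0] by simp
next
  case empty then show ?case using Q_smult[of 0 0] by simp
next
  case (insert x F) then show ?case by (simp add: Q_add)
qed

definition E :: "real \<Rightarrow> real" where
  "E t = (\<Sum>l\<in>UNIV. \<Sum>i\<in>UNIV. cmod ((XX A t *v Q (axis l 1)) $ i))"

lemma E_decay: "((\<lambda>t. E t / exp (Re lam * t)) \<longlongrightarrow> 0) at_top"
proof -
  have "((\<lambda>t. cmod ((XX A t *v Q (axis l 1)) $ i) / exp (Re lam * t)) \<longlongrightarrow> 0) at_top" for l i
  proof -
    obtain \<alpha> C k where a: "\<alpha> < Re lam" "C \<ge> 0"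
      and b: "\<And>t i. t \<ge> 0 \<Longrightarrow> cmod ((XX A t *v Q (axis l 1)) $ i) \<le> C * (1 + t) ^ k * exp (\<alpha> * t)"
      using decay[OF Q_w Q_wc] by blast
    have ev: "eventually (\<lambda>t. norm (cmod ((XX A t *v Q (axis l 1)) $ i) / exp (Re lam * t))
        \<le> C * (1 + t) ^ k * exp ((\<alpha> - Re lam) * t)) at_top"
    proof (rule eventually_mono[OF eventually_ge_at_top[of 0]])
      fix t :: real assume t: "t \<ge> 0"
      have "exp ((\<alpha> - Re lam) * t) = exp (\<alpha> * t) / exp (Re lam * t)"
        by (simp add: left_diff_distrib exp_diff)
      then show "norm (cmod ((XX A t *v Q (axis l 1)) $ i) / exp (Re lam * t))
        \<le> C * (1 + t) ^ k * exp ((\<alpha> - Re lam) * t)"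
        using b[OF t, of i] by (simp add: divide_right_mono)
    qed
    show ?thesis by (rule Lim_null_comparison[OF ev poly_exp_decay[OF a(1)]])
  qed
  then have "((\<lambda>t. \<Sum>l\<in>UNIV. \<Sum>i\<in>UNIV. cmod ((XX A t *v Q (axis l 1)) $ i) / exp (Re lam * t)) \<longlongrightarrow> 0) at_top"
    by (intro tendsto_null_sum) auto
  then show ?thesis unfolding E_def by (simp add: sum_divide_distrib)
qed

lemma Q_bound: "(\<Sum>i\<in>UNIV. cmod ((XX A t *v Q (cvec y)) $ i)) \<le> (\<Sum>l\<in>UNIV. \<bar>y $ l\<bar>) * E t"
proof -
  have "cvec y = (\<Sum>l\<in>UNIV. complex_of_real (y $ l) *s axis l 1)"
    using basis_expansion[of "cvec y"] by (simp add: cvec_def)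
  then have "XX A t *v Q (cvec y) = (\<Sum>l\<in>UNIV. complex_of_real (y $ l) *s (XX A t *v Q (axis l 1)))"
    by (simp add: Q_sum Q_smult mv_sum vector_scalar_commute)
  then have "cmod ((XX A t *v Q (cvec y)) $ i) \<le> (\<Sum>l\<in>UNIV. \<bar>y $ l\<bar> * cmod ((XX A t *v Q (axis l 1)) $ i))" for i
    by (simp add: sum_component) (rule order_trans[OF norm_sum], simp add: norm_mult)
  then have "(\<Sum>i\<in>UNIV. cmod ((XX A t *v Q (cvec y)) $ i)) \<le>
      (\<Sum>i\<in>UNIV. \<Sum>l\<in>UNIV. \<bar>y $ l\<bar> * cmod ((XX A t *v Q (axis l 1)) $ i))"
    by (rule sum_mono)
  also have "\<dots> = (\<Sum>l\<in>UNIV. \<bar>y $ l\<bar> * (\<Sum>i\<in>UNIV. cmod ((XX A t *v Q (axis l 1)) $ i)))"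
    by (simp add: sum_distrib_left) (rule sum.swap)
  also have "\<dots> \<le> (\<Sum>l\<in>UNIV. \<bar>y $ l\<bar> * E t)"
  proof -
    have "(\<Sum>i\<in>UNIV. cmod ((XX A t *v Q (axis l 1)) $ i)) \<le> E t" for l
      unfolding E_def by (rule member_le_sum) (auto intro: sum_nonneg)
    then show ?thesis by (intro sum_mono mult_left_mono) auto
  qed
  finally show ?thesis by (simp add: sum_distrib_right)
qed

end

lemma re_cis_prod: "Re (cis \<theta> * a * b) = cmod a * cmod b * cos (\<theta> + Arg a + Arg b)"
proof -
  have "cis \<theta> * a * b = rcis 1 \<theta> * rcis (cmod a) (Arg a) * rcis (cmod b) (Arg b)"
    by (simp only: rcis_cmod_Arg cis_rcis_eq)
  also have "\<dots> = rcis (cmod a * cmod b) (\<theta> + Arg a + Arg b)" by (simp add: rcis_mult)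
  finally show ?thesis by simp
qed

lemma re_mult_ofreal: "Re (z * complex_of_real r) = Re z * r"
  by simp

lemma re_cis1: "Re (cis \<theta> * a) = cmod a * cos (\<theta> + Arg a)"
proof -
  have "cis \<theta> * a = rcis 1 \<theta> * rcis (cmod a) (Arg a)"
    by (simp only: rcis_cmod_Arg cis_rcis_eq)
  also have "\<dots> = rcis (cmod a) (\<theta> + Arg a)" by (simp add: rcis_mult)
  finally show ?thesis by simp
qed

context spec begin

abbreviation "wh \<equiv> normalize_row N w"
abbreviation "vh \<equiv> normalize_col N v"
abbreviation "om \<equiv> Im lam"
definition "rw = rownorm N w"
definition "nv = N v"
definition "cr = Re c"

lemma nv_pos: "nv > 0"
  unfolding nv_def using cn_nonneg[OF norm, of v] cn_eq0[OF norm, of v] v0 by linarith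

lemma vh_def': "vh = complex_of_real (1 / nv) *s v"
  unfolding normalize_col_def nv_def ..

lemma N_vh: "N vh = 1"
  unfolding vh_def' cn_smult[OF norm] using nv_pos by (simp add: nv_def norm_divide)

lemma vh0: "vh \<noteq> 0" using N_vh cn_zero[OF norm] by auto

lemma Avh: "cmat A *v vh = lam *s vh"
  unfolding vh_def' by (simp add: vector_scalar_commute Av vector_smult_assoc mult.commute)

lemma c_real: "c = complex_of_real cr"
  using wv_real unfolding cr_def c_def by (simp add: complex_eq_iff)

lemma cr0: "cr \<noteq> 0" using c0 c_real by auto

lemma rw_pos: "rw > 0"
proof -
  let ?S = "{cmod (rowmul w u) | u. N u = 1}"
  have bdd: "bdd_above ?S"
  proof (rule bdd_aboveI)
    fix y assume "y \<in> ?S"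
    then obtain u where u: "y = cmod (rowmul w u)" "N u = 1" by blast
    have "cmod (rowmul w u) \<le> (\<Sum>i\<in>UNIV. cmod (w $ i) * cmod (u $ i))"
      unfolding rowmul_def by (rule order_trans[OF norm_sum]) (simp add: norm_mult)
    also have "\<dots> \<le> (\<Sum>i\<in>UNIV. cmod (w $ i) * (1 / cm N))"
      using comp_le[OF norm, of u] u(2) by (intro sum_mono mult_left_mono) auto
    finally show "y \<le> (\<Sum>i\<in>UNIV. cmod (w $ i) * (1 / cm N))" using u(1) by simp
  qed
  have mem: "cmod (rowmul w vh) \<in> ?S" using N_vh by blast
  have pos: "cmod (rowmul w vh) > 0"
    unfolding vh_def' rowmul_smult using nv_pos c0 by (simp add: c_def)
  have "cmod (rowmul w vh) \<le> Sup ?S" by (rule cSup_upper[OF mem bdd])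
  then show ?thesis unfolding rw_def rownorm_def using pos by linarith
qed

lemma wh_def': "wh = complex_of_real (1 / rw) *s w"
  unfolding normalize_row_def rw_def ..

lemma w_eq: "w = complex_of_real rw *s wh"
  unfolding wh_def' using rw_pos by (simp add: vector_smult_assoc)

lemma v_eq: "v = complex_of_real nv *s vh"
  unfolding vh_def' using nv_pos by (simp add: vector_smult_assoc)

definition kap :: "real \<Rightarrow> real" where
  "kap t = 2 * exp (Re lam * t) * rw * nv / cr"

lemma kap_abs: "\<bar>kap t\<bar> = 2 * exp (Re lam * t) * rw * nv / \<bar>cr\<bar>"
  unfolding kap_def using rw_pos nv_pos by (simp add: abs_mult)

lemma kap_nz: "kap t \<noteq> 0"
  unfolding kap_def using rw_pos nv_pos cr0 by simp

abbreviation "TV t y \<equiv> Theta_vec vh wh om t y"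
abbreviation "TM t \<equiv> Theta_mat vh wh om t"

lemma TV_comp: "TV t y $ k = Re (cis (om * t) * rowmul wh (cvec y) * vh $ k) / cmod (rowmul wh (cvec y))"
  if "rowmul wh (cvec y) \<noteq> 0"
  using that unfolding Theta_vec_def re_cis_prod by (simp add: add_ac)

lemma main_decomp:
  "cvec (mexp t A *v y) = cvec ((kap t * cmod (rowmul wh (cvec y))) *\<^sub>R TV t y) + XX A t *v Q (cvec y)"
proof -
  let ?u = "cvec y"
  define z where "z = exp (complex_of_real t * lam) * (rowmul w ?u / c)"
  have wcu: "rowmul (vcnj w) ?u = cnj (rowmul w ?u)"
    using rowmul_vcnj[of w ?u] by simp
  have z2: "exp (complex_of_real t * cnj lam) * (rowmul (vcnj w) ?u / cnj c) = cnj z"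
    unfolding z_def wcu by (simp add: exp_cnj)
  have D: "z *s v + cnj z *s vcnj v = cvec ((kap t * cmod (rowmul wh ?u)) *\<^sub>R TV t y)"
  proof -
    have e1: "(z *s v + cnj z *s vcnj v) $ k = complex_of_real (2 * Re (z * v $ k))" for k
      using complex_add_cnj[of "z * v $ k"] by (simp add: vcnj_def)
    have e2: "Re (z * v $ k) = kap t / 2 * cmod (rowmul wh ?u) * TV t y $ k" for k
    proof -
      have "z * v $ k = complex_of_real (exp (Re lam * t) * rw * nv / cr) * (cis (om * t) * rowmul wh ?u * vh $ k)"
        unfolding z_def c_real exp_eq_polar
        by (subst w_eq, subst v_eq) (simp add: rowmul_smult_left field_simps mult.commute)
      then have "Re (z * v $ k) = (exp (Re lam * t) * rw * nv / cr) * Re (cis (om * t) * rowmul wh ?u * vh $ k)"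
        by simp
      also have "Re (cis (om * t) * rowmul wh ?u * vh $ k) = cmod (rowmul wh ?u) * TV t y $ k"
        unfolding Theta_vec_def re_cis_prod by (simp add: add_ac mult_ac)
      finally show ?thesis unfolding kap_def by simp
    qed
    show ?thesis
    proof (rule iffD2[OF vec_eq_iff], rule allI)
      fix k
      have "(z *s v + cnj z *s vcnj v) $ k = complex_of_real (2 * (kap t / 2 * cmod (rowmul wh ?u) * TV t y $ k))"
        unfolding e1 e2 ..
      also have "\<dots> = cvec ((kap t * cmod (rowmul wh ?u)) *\<^sub>R TV t y) $ k"
        by (simp add: cvec_def)
      finally show "(z *s v + cnj z *s vcnj v) $ k = cvec ((kap t * cmod (rowmul wh ?u)) *\<^sub>R TV t y) $ k" .
    qed
  qed
  have "cvec (mexp t A *v y) = XX A t *v ?u" by (simp add: cvec_mult)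
  also have "\<dots> = z *s v + (exp (complex_of_real t * cnj lam) * (rowmul (vcnj w) ?u / cnj c)) *s vcnj v + XX A t *v Q ?u"
    unfolding z_def by (rule decomp)
  also have "\<dots> = z *s v + cnj z *s vcnj v + XX A t *v Q ?u"
    unfolding z2 ..
  finally show ?thesis unfolding D .
qed

lemma TM_mv: "TM t *v y = cmod (rowmul wh (cvec y)) *\<^sub>R TV t y"
proof -
  have e: "(TM t *v y) $ k = Re (cis (om * t) * vh $ k * rowmul wh (cvec y))" for k
  proof -
    have "(TM t *v y) $ k = (\<Sum>l\<in>UNIV. Re (cis (om * t) * vh $ k * wh $ l) * y $ l)"
      unfolding Theta_mat_def matrix_vector_mult_def re_cis_prod by simp
    also have "\<dots> = (\<Sum>l\<in>UNIV. Re (cis (om * t) * vh $ k * (wh $ l * complex_of_real (y $ l))))"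
      by (rule sum.cong[OF refl]) (simp only: mult.assoc[symmetric] re_mult_ofreal)
    also have "\<dots> = Re (\<Sum>l\<in>UNIV. cis (om * t) * vh $ k * (wh $ l * complex_of_real (y $ l)))"
      by (simp only: Re_sum)
    also have "\<dots> = Re (cis (om * t) * vh $ k * rowmul wh (cvec y))"
      by (simp add: rowmul_def cvec_def sum_distrib_left)
    finally show ?thesis .
  qed
  show ?thesis
  proof (rule iffD2[OF vec_eq_iff], rule allI)
    fix k
    have "(TM t *v y) $ k = cmod (vh $ k) * cmod (rowmul wh (cvec y)) * cos (om * t + Arg (vh $ k) + Arg (rowmul wh (cvec y)))"
      unfolding e re_cis_prod ..
    then show "(TM t *v y) $ k = (cmod (rowmul wh (cvec y)) *\<^sub>R TV t y) $ k"
      unfolding Theta_vec_def by (simp add: mult_ac)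
  qed
qed

end

context spec begin

lemma E_nonneg: "E t \<ge> 0"
  unfolding E_def by (intro sum_nonneg) auto

lemma err:
  "\<bar>rnorm N (mexp t A *v y) - \<bar>kap t\<bar> * rnorm N (TM t *v y)\<bar> \<le> cnB N * ((\<Sum>l\<in>UNIV. \<bar>y $ l\<bar>) * E t)"
proof -
  define a where "a = cvec ((kap t * cmod (rowmul wh (cvec y))) *\<^sub>R TV t y)"
  define b where "b = XX A t *v Q (cvec y)"
  have 1: "rnorm N (mexp t A *v y) = N (a + b)" unfolding rnorm_def a_def b_def main_decomp ..
  have 2: "\<bar>kap t\<bar> * rnorm N (TM t *v y) = N a"
    unfolding TM_mv a_def rn_scale[OF norm] rnorm_def[symmetric] by (simp add: abs_mult mult_ac)
  have "\<bar>N (a + b) - N a\<bar> \<le> N (a + b - a)" by (rule cn_rev[OF norm])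
  also have "\<dots> = N b" by simp
  also have "\<dots> \<le> cnB N * (\<Sum>i\<in>UNIV. cmod (b $ i))" by (rule cn_upper[OF norm])
  also have "\<dots> \<le> cnB N * ((\<Sum>l\<in>UNIV. \<bar>y $ l\<bar>) * E t)"
    unfolding b_def by (rule mult_left_mono[OF Q_bound cnB_nonneg[OF norm]])
  finally show ?thesis unfolding 1 2 .
qed

definition "Kc = cnB N * (real CARD('n) / cm N)"

lemma Kc_nonneg: "Kc \<ge> 0"
  unfolding Kc_def using cnB_nonneg[OF norm] cm(1)[OF norm] by simp

lemma err_unit:
  assumes "rnorm N y = 1"
  shows "\<bar>rnorm N (mexp t A *v y) - \<bar>kap t\<bar> * rnorm N (TM t *v y)\<bar> \<le> Kc * E t"
proof -
  have "(\<Sum>l\<in>UNIV. \<bar>y $ l\<bar>) \<le> (\<Sum>l\<in>(UNIV::'n set). 1 / cm N)"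
    using rcomp_le[OF norm, of y] assms by (intro sum_mono) auto
  then have "(\<Sum>l\<in>UNIV. \<bar>y $ l\<bar>) \<le> real CARD('n) / cm N" by simp
  then have "cnB N * ((\<Sum>l\<in>UNIV. \<bar>y $ l\<bar>) * E t) \<le> cnB N * ((real CARD('n) / cm N) * E t)"
    using cnB_nonneg[OF norm] E_nonneg by (intro mult_left_mono mult_right_mono) auto
  also have "\<dots> = Kc * E t" unfolding Kc_def by (simp add: mult_ac)
  finally have "cnB N * ((\<Sum>l\<in>UNIV. \<bar>y $ l\<bar>) * E t) \<le> Kc * E t" .
  then show ?thesis using err[of t y] by linarith
qed

lemma mnorm_close: "\<bar>mnorm N (mexp t A) - \<bar>kap t\<bar> * mnorm N (TM t)\<bar> \<le> Kc * E t"
proof -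
  have k: "\<bar>kap t\<bar> > 0" using kap_nz by simp
  have up: "mnorm N (mexp t A) \<le> \<bar>kap t\<bar> * mnorm N (TM t) + Kc * E t"
  proof (rule mnorm_le[OF norm])
    fix x assume x: "rnorm N x = 1"
    have "rnorm N (mexp t A *v x) \<le> \<bar>kap t\<bar> * rnorm N (TM t *v x) + Kc * E t"
      using err_unit[OF x, of t] by linarith
    also have "\<dots> \<le> \<bar>kap t\<bar> * mnorm N (TM t) + Kc * E t"
      using mnorm_ge[OF norm x, of "TM t"] k by (simp add: mult_left_mono)
    finally show "rnorm N (mexp t A *v x) \<le> \<bar>kap t\<bar> * mnorm N (TM t) + Kc * E t" .
  qed
  have "mnorm N (TM t) \<le> (mnorm N (mexp t A) + Kc * E t) / \<bar>kap t\<bar>"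
  proof (rule mnorm_le[OF norm])
    fix x assume x: "rnorm N x = 1"
    have "\<bar>kap t\<bar> * rnorm N (TM t *v x) \<le> rnorm N (mexp t A *v x) + Kc * E t"
      using err_unit[OF x, of t] by linarith
    also have "\<dots> \<le> mnorm N (mexp t A) + Kc * E t"
      using mnorm_ge[OF norm x, of "mexp t A"] by simp
    finally show "rnorm N (TM t *v x) \<le> (mnorm N (mexp t A) + Kc * E t) / \<bar>kap t\<bar>"
      using k by (simp add: pos_le_divide_eq mult.commute)
  qed
  then have lo: "\<bar>kap t\<bar> * mnorm N (TM t) \<le> mnorm N (mexp t A) + Kc * E t"
    using k by (simp add: pos_le_divide_eq mult.commute)
  from up lo show ?thesis by linarith
qed

definition psi :: "complex \<Rightarrow> real" where
  "psi z = N (\<chi> k. complex_of_real (Re (z * vh $ k)))"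

lemma psi_pos: assumes "cmod z = 1" shows "psi z > 0"
proof (rule ccontr)
  assume "\<not> psi z > 0"
  then have "psi z = 0" using cn_nonneg[OF norm] unfolding psi_def by (metis less_eq_real_def)
  then have "(\<chi> k. complex_of_real (Re (z * vh $ k))) = 0" unfolding psi_def using cn_eq0[OF norm] by blast
  then have re0: "Re (z * vh $ k) = 0" for k by (metis (no_types) of_real_eq_0_iff vec_lambda_beta zero_index)
  define y where "y = z *s vh"
  have Ay: "cmat A *v y = lam *s y" unfolding y_def by (simp add: vector_scalar_commute Avh vector_smult_assoc mult.commute)
  have vy: "vcnj y = - y" using re0 by (simp add: y_def vcnj_def vec_eq_iff complex_eq_iff)
  have "cmat A *v vcnj y = cnj lam *s vcnj y" by (rule vcnj_right[OF Ay])
  moreover have "cmat A *v (- y) = - (cmat A *v y)"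
    by (metis matrix_vector_mult_diff_distrib diff_0 matrix_vector_mult_0_right)
  ultimately have "- (lam *s y) = cnj lam *s (- y)" unfolding vy Ay by simp
  then have "lam *s y = cnj lam *s y" by (simp add: vec_eq_iff)
  then have "y = 0" using lam_ne by (simp add: vec_eq_iff)
  then have "vh = 0" using assms unfolding y_def by (auto simp: vec_eq_iff)
  then show False using vh0 by simp
qed

lemma psi_cont: "continuous_on UNIV psi"
proof -
  have "continuous_on UNIV (\<lambda>z. \<chi> k. complex_of_real (Re (z * vh $ k)))"
    by (intro continuous_intros)
  then show ?thesis unfolding psi_def
    using continuous_on_compose[of UNIV "\<lambda>z. \<chi> k. complex_of_real (Re (z * vh $ k))" N] cn_cont[OF norm]
    by (simp add: o_def continuous_on_subset)
qed

lemma delta: "\<exists>d>0. \<forall>t y. rnorm N (TV t y) \<ge> d"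
proof -
  let ?S = "sphere (0::complex) 1"
  have "compact ?S" by simp
  moreover have "?S \<noteq> {}" by (auto intro: exI[of _ 1])
  moreover have "continuous_on ?S psi" using psi_cont continuous_on_subset by blast
  ultimately obtain z0 where z0: "z0 \<in> ?S" "\<And>z. z \<in> ?S \<Longrightarrow> psi z0 \<le> psi z"
    using continuous_attains_inf by metis
  have pz: "psi z0 > 0" using z0(1) psi_pos by simp
  have "rnorm N (TV t y) \<ge> psi z0" for t y
  proof -
    let ?p = "om * t + Arg (rowmul wh (cvec y))"
    have "cvec (TV t y) = (\<chi> k. complex_of_real (Re (cis ?p * vh $ k)))"
      unfolding Theta_vec_def re_cis1 cvec_def by (simp add: add_ac)
    then have "rnorm N (TV t y) = psi (cis ?p)" unfolding rnorm_def psi_def by simp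
    moreover have "cis ?p \<in> ?S" by simp
    ultimately show ?thesis using z0(2) by simp
  qed
  then show ?thesis using pz by blast
qed

end

lemma ratio_lemma:
  fixes a b e1 e2 :: "real \<Rightarrow> real"
  assumes a: "\<And>t. a t \<ge> d" and b: "\<And>t. b t \<ge> d" and d: "d > 0"
    and e1: "(e1 \<longlongrightarrow> 0) at_top" and e2: "(e2 \<longlongrightarrow> 0) at_top"
  shows "((\<lambda>t. ((a t + e1 t) / (b t + e2 t)) / (a t / b t)) \<longlongrightarrow> 1) at_top"
proof -
  have q1: "((\<lambda>t. e1 t / a t) \<longlongrightarrow> 0) at_top"
  proof (rule Lim_null_comparison)
    show "eventually (\<lambda>t. norm (e1 t / a t) \<le> norm (e1 t) / d) at_top"
      using a d by (intro always_eventually allI) (simp add: abs_divide frac_le order_trans[OF _ a])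
    show "((\<lambda>t. norm (e1 t) / d) \<longlongrightarrow> 0) at_top"
      using tendsto_divide[OF tendsto_norm[OF e1] tendsto_const[of d]] d by simp
  qed
  have q2: "((\<lambda>t. e2 t / b t) \<longlongrightarrow> 0) at_top"
  proof (rule Lim_null_comparison)
    show "eventually (\<lambda>t. norm (e2 t / b t) \<le> norm (e2 t) / d) at_top"
      using b d by (intro always_eventually allI) (simp add: abs_divide frac_le order_trans[OF _ b])
    show "((\<lambda>t. norm (e2 t) / d) \<longlongrightarrow> 0) at_top"
      using tendsto_divide[OF tendsto_norm[OF e2] tendsto_const[of d]] d by simp
  qed
  have lim: "((\<lambda>t. (1 + e1 t / a t) / (1 + e2 t / b t)) \<longlongrightarrow> (1 + 0) / (1 + 0)) at_top"
    by (intro tendsto_intros q1 q2) simp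
  have ev: "eventually (\<lambda>t. \<bar>e2 t\<bar> < d) at_top"
    using e2 d unfolding tendsto_iff dist_real_def by (auto elim: allE[of _ d])
  have "eventually (\<lambda>t. (1 + e1 t / a t) / (1 + e2 t / b t) = ((a t + e1 t) / (b t + e2 t)) / (a t / b t)) at_top"
  proof (rule eventually_mono[OF ev])
    fix t assume t: "\<bar>e2 t\<bar> < d"
    have ap: "a t > 0" using a[of t] d by linarith
    have bp: "b t > 0" using b[of t] d by linarith
    have bep: "b t + e2 t > 0" using b[of t] t by linarith
    show "(1 + e1 t / a t) / (1 + e2 t / b t) = ((a t + e1 t) / (b t + e2 t)) / (a t / b t)"
      using ap bp bep by (simp add: field_simps)
  qed
  from tendsto_cong[OF this] lim show ?thesis by simp
qed

context spec begin

lemma rowmul_wh: "rowmul wh u = complex_of_real (1 / rw) * rowmul w u"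
  unfolding wh_def' rowmul_smult_left ..

lemma kap_inv: "Kc * E t / \<bar>kap t\<bar> = (Kc * \<bar>cr\<bar> / (2 * rw * nv)) * (E t / exp (Re lam * t))"
  unfolding kap_abs using rw_pos nv_pos cr0 by (simp add: field_simps)

lemma err_lim:
  assumes f: "\<And>t. \<bar>f t\<bar> \<le> Kc * E t / \<bar>kap t\<bar>"
  shows "(f \<longlongrightarrow> 0) at_top"
proof (rule Lim_null_comparison)
  show "eventually (\<lambda>t. norm (f t) \<le> (Kc * \<bar>cr\<bar> / (2 * rw * nv)) * (E t / exp (Re lam * t))) at_top"
  proof (intro always_eventually allI)
    fix t show "norm (f t) \<le> (Kc * \<bar>cr\<bar> / (2 * rw * nv)) * (E t / exp (Re lam * t))"
      using f[of t] unfolding kap_inv by simp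
  qed
  show "((\<lambda>t. (Kc * \<bar>cr\<bar> / (2 * rw * nv)) * (E t / exp (Re lam * t))) \<longlongrightarrow> 0) at_top"
    using tendsto_mult_left[OF E_decay, of "Kc * \<bar>cr\<bar> / (2 * rw * nv)"] by simp
qed

lemma unit_split:
  assumes y: "rnorm N y = 1"
  shows "((\<lambda>t. rnorm N (mexp t A *v y) / \<bar>kap t\<bar> - cmod (rowmul wh (cvec y)) * rnorm N (TV t y)) \<longlongrightarrow> 0) at_top"
proof (rule err_lim)
  fix t
  let ?a = "cmod (rowmul wh (cvec y)) * rnorm N (TV t y)"
  have ra: "rnorm N (TM t *v y) = ?a" unfolding TM_mv rn_scale[OF norm] by simp
  have k: "\<bar>kap t\<bar> > 0" using kap_nz by simp
  have "\<bar>rnorm N (mexp t A *v y) / \<bar>kap t\<bar> - ?a\<bar> = \<bar>rnorm N (mexp t A *v y) - \<bar>kap t\<bar> * ?a\<bar> / \<bar>kap t\<bar>"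
    using k by (simp add: field_simps abs_divide)
  also have "\<dots> \<le> Kc * E t / \<bar>kap t\<bar>"
    using err_unit[OF y, of t] k unfolding ra by (simp add: divide_right_mono)
  finally show "\<bar>rnorm N (mexp t A *v y) / \<bar>kap t\<bar> - ?a\<bar> \<le> Kc * E t / \<bar>kap t\<bar>" .
qed

lemma final:
  assumes z0: "rnorm N z0 = 1"
    and wy: "rowmul w (cvec y0) \<noteq> 0"
    and wz: "rowmul w (cvec z0) \<noteq> 0"
  shows
    "let wh = normalize_row N w; vh = normalize_col N v; om = Im lam;
         yh = normalize_real N y0
     in asym (\<lambda>t. K2 N A t y0 z0)
             (\<lambda>t. (cmod (rowmul wh (cvec z0)) / cmod (rowmul wh (cvec yh)))
                  * (rnorm N (Theta_vec vh wh om t z0) / rnorm N (Theta_vec vh wh om t yh)))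
      \<and> asym (\<lambda>t. K1 N A t y0)
             (\<lambda>t. (1 / cmod (rowmul wh (cvec yh)))
                  * (mnorm N (Theta_mat vh wh om t) / rnorm N (Theta_vec vh wh om t yh)))"
proof -
  define yh where "yh = normalize_real N y0"
  have y00: "y0 \<noteq> 0" using wy by (auto simp: cvec_def rowmul_def)
  then have ry: "rnorm N y0 > 0" using rn_eq0[OF norm, of y0] rn_nonneg[OF norm, of y0] by linarith
  have yh1: "rnorm N yh = 1" unfolding yh_def normalize_real_def rn_scale[OF norm] using ry by simp
  have cyh: "cvec yh = complex_of_real (1 / rnorm N y0) *s cvec y0"
    unfolding yh_def normalize_real_def cvec_scaleR ..
  have wyh: "cmod (rowmul wh (cvec yh)) > 0"
    unfolding cyh rowmul_smult rowmul_wh using ry rw_pos wy by simp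
  have wzh: "cmod (rowmul wh (cvec z0)) > 0"
    unfolding rowmul_wh using rw_pos wz by simp
  obtain dl where dl: "dl > 0" "\<And>t y. rnorm N (TV t y) \<ge> dl" using delta by blast
  define az where "az = (\<lambda>t. cmod (rowmul wh (cvec z0)) * rnorm N (TV t z0))"
  define ay where "ay = (\<lambda>t. cmod (rowmul wh (cvec yh)) * rnorm N (TV t yh))"
  define ez where "ez = (\<lambda>t. rnorm N (mexp t A *v z0) / \<bar>kap t\<bar> - az t)"
  define ey where "ey = (\<lambda>t. rnorm N (mexp t A *v yh) / \<bar>kap t\<bar> - ay t)"
  have sz2: "(ez \<longlongrightarrow> 0) at_top" unfolding ez_def az_def by (rule unit_split[OF z0])
  have sy2: "(ey \<longlongrightarrow> 0) at_top" unfolding ey_def ay_def by (rule unit_split[OF yh1])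
  have sz1: "rnorm N (mexp t A *v z0) = \<bar>kap t\<bar> * (az t + ez t)" for t
    unfolding ez_def using kap_nz[of t] by simp
  have sy1: "rnorm N (mexp t A *v yh) = \<bar>kap t\<bar> * (ay t + ey t)" for t
    unfolding ey_def using kap_nz[of t] by simp
  define d where "d = min (cmod (rowmul wh (cvec z0))) (cmod (rowmul wh (cvec yh))) * dl"
  have d: "d > 0" unfolding d_def using wyh wzh dl by simp
  have azd: "az t \<ge> d" for t
    unfolding az_def d_def using dl(2)[of t z0] wzh dl(1)
    by (intro mult_mono) auto
  have ayd: "ay t \<ge> d" for t
    unfolding ay_def d_def using dl(2)[of t yh] wyh dl(1)
    by (intro mult_mono) auto
  define m where "m = (\<lambda>t. mnorm N (TM t))"
  define em where "em = (\<lambda>t. mnorm N (mexp t A) / \<bar>kap t\<bar> - m t)"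
  have md: "m t \<ge> d" for t
  proof -
    have "az t = rnorm N (TM t *v z0)" unfolding az_def TM_mv rn_scale[OF norm] by simp
    also have "\<dots> \<le> m t" unfolding m_def by (rule mnorm_ge[OF norm z0])
    finally show ?thesis using azd[of t] by simp
  qed
  have em: "(em \<longlongrightarrow> 0) at_top"
  proof (rule err_lim)
    fix t
    have k: "\<bar>kap t\<bar> > 0" using kap_nz by simp
    have "\<bar>em t\<bar> = \<bar>mnorm N (mexp t A) - \<bar>kap t\<bar> * m t\<bar> / \<bar>kap t\<bar>"
      unfolding em_def using k by (simp add: field_simps abs_divide)
    also have "\<dots> \<le> Kc * E t / \<bar>kap t\<bar>"
      using mnorm_close[of t] k unfolding m_def by (simp add: divide_right_mono)
    finally show "\<bar>em t\<bar> \<le> Kc * E t / \<bar>kap t\<bar>" .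
  qed
  have mm: "mnorm N (mexp t A) = \<bar>kap t\<bar> * (m t + em t)" for t
    unfolding em_def using kap_nz by simp
  have A1: "asym (\<lambda>t. K2 N A t y0 z0)
             (\<lambda>t. (cmod (rowmul wh (cvec z0)) / cmod (rowmul wh (cvec yh)))
                  * (rnorm N (TV t z0) / rnorm N (TV t yh)))"
  proof -
    have "(\<lambda>t. K2 N A t y0 z0 / ((cmod (rowmul wh (cvec z0)) / cmod (rowmul wh (cvec yh)))
                  * (rnorm N (TV t z0) / rnorm N (TV t yh)))) =
          (\<lambda>t. ((az t + ez t) / (ay t + ey t)) / (az t / ay t))"
    proof (rule ext)
      fix t
      have k: "\<bar>kap t\<bar> \<noteq> 0" using kap_nz by simp
      have "K2 N A t y0 z0 = (az t + ez t) / (ay t + ey t)"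
        unfolding K2_def yh_def[symmetric] sz1[of t] sy1[of t] using k by simp
      moreover have "(cmod (rowmul wh (cvec z0)) / cmod (rowmul wh (cvec yh))) * (rnorm N (TV t z0) / rnorm N (TV t yh))
          = az t / ay t" unfolding az_def ay_def by simp
      ultimately show "K2 N A t y0 z0 / ((cmod (rowmul wh (cvec z0)) / cmod (rowmul wh (cvec yh)))
                  * (rnorm N (TV t z0) / rnorm N (TV t yh))) = ((az t + ez t) / (ay t + ey t)) / (az t / ay t)"
        by simp
    qed
    then show ?thesis unfolding asym_def using ratio_lemma[OF azd ayd d sz2 sy2] by simp
  qed
  have A2: "asym (\<lambda>t. K1 N A t y0)
             (\<lambda>t. (1 / cmod (rowmul wh (cvec yh))) * (mnorm N (TM t) / rnorm N (TV t yh)))"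
  proof -
    have "(\<lambda>t. K1 N A t y0 / ((1 / cmod (rowmul wh (cvec yh))) * (mnorm N (TM t) / rnorm N (TV t yh)))) =
          (\<lambda>t. ((m t + em t) / (ay t + ey t)) / (m t / ay t))"
    proof (rule ext)
      fix t
      have k: "\<bar>kap t\<bar> \<noteq> 0" using kap_nz by simp
      have "K1 N A t y0 = (m t + em t) / (ay t + ey t)"
        unfolding K1_def yh_def[symmetric] mm[of t] sy1[of t] using k by simp
      moreover have "(1 / cmod (rowmul wh (cvec yh))) * (mnorm N (TM t) / rnorm N (TV t yh)) = m t / ay t"
        unfolding m_def ay_def by simp
      ultimately show "K1 N A t y0 / ((1 / cmod (rowmul wh (cvec yh))) * (mnorm N (TM t) / rnorm N (TV t yh)))
          = ((m t + em t) / (ay t + ey t)) / (m t / ay t)"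
        by simp
    qed
    then show ?thesis unfolding asym_def using ratio_lemma[OF md ayd d em sy2] by simp
  qed
  show ?thesis unfolding Let_def yh_def[symmetric] using A1 A2 by blast
qed

end

theorem theorem7:
  fixes N :: "complex^'n \<Rightarrow> real"
    and A :: "real^'n^'n"
    and lam1 :: complex
    and w v :: "complex^'n"
    and y0 z0 :: "real^'n"
  assumes norm: "is_cnorm N"
    and Lam: "Lambda1 A = {lam1, cnj lam1}"
    and im_pos: "Im lam1 > 0"
    and simple1: "simple_eigenvalue A lam1"
    and simple2: "simple_eigenvalue A (cnj lam1)"
    and w: "left_eigvec A lam1 w"
    and v: "right_eigvec A lam1 v"
    and wv_real: "Im (rowmul w v) = 0"
    and z0: "rnorm N z0 = 1"
    and wy: "rowmul w (cvec y0) \<noteq> 0"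
    and wz: "rowmul w (cvec z0) \<noteq> 0"
  shows
    "let wh = normalize_row N w; vh = normalize_col N v; om = Im lam1;
         yh = normalize_real N y0
     in asym (\<lambda>t. K2 N A t y0 z0)
             (\<lambda>t. (cmod (rowmul wh (cvec z0)) / cmod (rowmul wh (cvec yh)))
                  * (rnorm N (Theta_vec vh wh om t z0) / rnorm N (Theta_vec vh wh om t yh)))
      \<and> asym (\<lambda>t. K1 N A t y0)
             (\<lambda>t. (1 / cmod (rowmul wh (cvec yh)))
                  * (mnorm N (Theta_mat vh wh om t) / rnorm N (Theta_vec vh wh om t yh)))"
proof -
  interpret spec N A lam1 w v
    using norm Lam im_pos simple1 w v wv_real by unfold_locales
  show ?thesis by (rule final[OF z0 wy wz])
qed

end
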